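(* The set consisting of the NOR gate and fanout gates (with any number of outputs) parsimoniously simulates, via planar simulations, each of the OR gate, the AND gate, and the crossover.
   Context: A gadget consists of a finite set of ports, equipped with a cyclic order, and a constraint, which is a set of subsets of the ports. A network of gadgets from $S$ is a finite undirected multigraph whose vertices are labeled by gadgets from $S$, each vertex's edge incidences being in bijection with the ports of its label. An assignment orients every edge; a vertex is satisfied if the set of its ports whose edges point into it belongs to its constraint. A simulation using gadgets from $S$ is a network of gadgets from $S$ that may additionally have dangling edges, each incident to only one vertex (equivalently, an extra outside-world vertex whose constraint contains every subset). It is planar if the graph including the outside world has a planar embedding respecting the port cyclic orders; the simulated gadget's ports are then the dangling edges in their order around the simulation. The simulated gadget's constraint consists of each set $D$ of dangling edges such that some assignment satisfying every non-outside-world vertex makes exactly the dangling edges in $D$ point into the simulation. A simulation is parsimonious if for each set in the simulated gadget's constraint there is exactly one such satisfying assignment realizing it; $S$ parsimoniously simulates $G$ if some parsimonious simulation using gadgets from $S$ has simulated gadget $G$. Gadgets: NOR gate: ports $a,b,c$, constraint $\{\emptyset,\{a,c\},\{b,c\},\{a,b,c\}\}$. $k$-way fanout gate: ports $a,c_1,\dots,c_k$, constraint $\{\{a\},\{c_1,\dots,c_k\}\}$. OR gate: ports $a,b,c$, constraint $\{\{c\},\{a\},\{b\},\{a,b\}\}$. AND gate: ports $a,b,c$, constraint $\{\{c\},\{a,c\},\{b,c\},\{a,b\}\}$. Crossover: ports $a_1,b_1,a_2,b_2$ in this cyclic order, constraint $\{\{a_1,b_1\},\{a_2,b_1\},\{a_1,b_2\},\{a_2,b_2\}\}$.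 *)

theory Defs
  imports Main
begin

text \<open>A gadget with k ports: the ports are 0,...,k-1, listed in their cyclic order.
  The constraint is a set of subsets of the ports.\<close>
record gadget =
  arity :: nat
  cons :: "nat set set"

definition NOR_gate :: gadget where
  "NOR_gate = \<lparr> arity = 3, cons = {{}, {0,2}, {1,2}, {0,1,2}} \<rparr>"

text \<open>k-way fanout: port a = 0, outputs c_1..c_k = 1..k.\<close>
definition fanout_gate :: "nat \<Rightarrow> gadget" where
  "fanout_gate k = \<lparr> arity = Suc k, cons = {{0}, {1..k}} \<rparr>"

definition OR_gate :: gadget where
  "OR_gate = \<lparr> arity = 3, cons = {{2}, {0}, {1}, {0,1}} \<rparr>"

definition AND_gate :: gadget where
  "AND_gate = \<lparr> arity = 3, cons = {{2}, {0,2}, {1,2}, {0,1}} \<rparr>"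

text \<open>Crossover: ports a1=0, b1=1, a2=2, b2=3 in this cyclic order.\<close>
definition crossover :: gadget where
  "crossover = \<lparr> arity = 4, cons = {{0,1}, {2,1}, {0,3}, {2,3}} \<rparr>"

text \<open>A dart (half-edge) is a pair (vertex, port). The multigraph is given by a
  fixed-point-free involution mate on the darts, pairing the two ends of each edge.
  Dangling edges are the edges with one end at Out.\<close>
datatype vtx = Out | In nat

record simulation =
  nverts :: nat
  lab :: "nat \<Rightarrow> gadget"
  nout :: nat
  mate :: "vtx \<times> nat \<Rightarrow> vtx \<times> nat"

fun ar :: "simulation \<Rightarrow> vtx \<Rightarrow> nat" where
  "ar s Out = nout s"
| "ar s (In v) = arity (lab s v)"

definition verts :: "simulation \<Rightarrow> vtx set" where
  "verts s = insert Out (In ` {..<nverts s})"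

definition darts :: "simulation \<Rightarrow> (vtx \<times> nat) set" where
  "darts s = {(x, i). x \<in> verts s \<and> i < ar s x}"

definition wf_sim :: "gadget set \<Rightarrow> simulation \<Rightarrow> bool" where
  "wf_sim S s \<longleftrightarrow>
     (\<forall>v < nverts s. lab s v \<in> S) \<and>
     (\<forall>d \<in> darts s. mate s d \<in> darts s \<and> mate s (mate s d) = d \<and> mate s d \<noteq> d) \<and>
     (\<forall>i < nout s. fst (mate s (Out, i)) \<noteq> Out)"

text \<open>An assignment is given by the set A of darts at which the edge points into the
  incident vertex; every edge is oriented in exactly one direction.\<close>
definition assignment :: "simulation \<Rightarrow> (vtx \<times> nat) set \<Rightarrow> bool" where
  "assignment s A \<longleftrightarrow> A \<subseteq> darts s \<and> (\<forall>d \<in> darts s. (d \<in> A) \<noteq> (mate s d \<in> A))"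

definition satisfying :: "simulation \<Rightarrow> (vtx \<times> nat) set \<Rightarrow> bool" where
  "satisfying s A \<longleftrightarrow> assignment s A \<and>
     (\<forall>v < nverts s. {i. (In v, i) \<in> A} \<in> cons (lab s v))"

text \<open>Dangling edges pointing into the simulation (i.e. out of the outside world).\<close>
definition into_sim :: "simulation \<Rightarrow> (vtx \<times> nat) set \<Rightarrow> nat set" where
  "into_sim s A = {i. i < nout s \<and> (Out, i) \<notin> A}"

definition sim_cons :: "simulation \<Rightarrow> nat set set" where
  "sim_cons s = {D. \<exists>A. satisfying s A \<and> D = into_sim s A}"

definition parsimonious :: "simulation \<Rightarrow> bool" where
  "parsimonious s \<longleftrightarrow> (\<forall>D \<in> sim_cons s. \<exists>!A. satisfying s A \<and> into_sim s A = D)"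

text \<open>The simulated gadget has ports 0..nout-1 (the dangling edges in their cyclic order
  around the outside world vertex); it equals G up to a cyclic relabelling of ports.\<close>
definition simulates :: "simulation \<Rightarrow> gadget \<Rightarrow> bool" where
  "simulates s G \<longleftrightarrow> arity G = nout s \<and>
     (\<exists>r. cons G = (\<lambda>D. (\<lambda>i. (i + r) mod nout s) ` D) ` sim_cons s)"

text \<open>The port cyclic orders give a rotation system; faces are the orbits of
  rotation composed with mate. Planarity respecting the rotation system is the
  Euler condition V - E + F = 2C (each component has genus 0); an isolated vertex
  counts as one face.\<close>
definition rot :: "simulation \<Rightarrow> vtx \<times> nat \<Rightarrow> vtx \<times> nat" where
  "rot s d = (fst d, Suc (snd d) mod ar s (fst d))"

definition face_step :: "simulation \<Rightarrow> vtx \<times> nat \<Rightarrow> vtx \<times> nat" where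
  "face_step s d = rot s (mate s d)"

definition faces :: "simulation \<Rightarrow> (vtx \<times> nat) set set" where
  "faces s = darts s // {(d, e). d \<in> darts s \<and> e \<in> darts s \<and> (\<exists>k. (face_step s ^^ k) d = e)}"

definition adj :: "simulation \<Rightarrow> (vtx \<times> vtx) set" where
  "adj s = {(x, y). \<exists>i j. (x, i) \<in> darts s \<and> mate s (x, i) = (y, j)}"

definition components :: "simulation \<Rightarrow> vtx set set" where
  "components s = verts s // ((adj s)\<^sup>*)"

definition planar :: "simulation \<Rightarrow> bool" where
  "planar s \<longleftrightarrow>
     int (card (verts s)) - int (card (darts s) div 2)
       + int (card (faces s) + card {x \<in> verts s. ar s x = 0})
     = 2 * int (card (components s))"

definition planar_parsimoniously_simulates :: "gadget set \<Rightarrow> gadget \<Rightarrow> bool" where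
  "planar_parsimoniously_simulates S G \<longleftrightarrow>
     (\<exists>s. wf_sim S s \<and> planar s \<and> parsimonious s \<and> simulates s G)"

end

theory Submission
  imports Defs
begin


definition darts_list :: "simulation \<Rightarrow> (vtx \<times> nat) list" where
  "darts_list s = concat (map (\<lambda>x. map (Pair x) [0..<ar s x]) (Out # map In [0..<nverts s]))"

lemma verts_eq: "verts s = set (Out # map In [0..<nverts s])"
  by (auto simp: verts_def)

lemma darts_eq: "darts s = set (darts_list s)"
  by (auto simp: darts_def darts_list_def verts_def)

lemma card_verts: "card (verts s) = Suc (nverts s)"
proof -
  have "card (In ` {..<nverts s}) = nverts s" by (simp add: card_image inj_on_def)
  then show ?thesis by (simp add: verts_def image_iff)
qed

lemma upt_add1: "[i..<j] = (if i < j then i # [i+1..<j] else [])"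
  by (simp add: upt_rec)

lemma all_less_upt: "(\<forall>v<n. P v) = (\<forall>v\<in>set [0..<n]. P v)" by auto

lemma Mate_rule: "satisfying s A \<Longrightarrow> d \<in> darts s \<Longrightarrow> mate s d = e \<Longrightarrow> (e \<in> A) = (d \<notin> A)"
  unfolding satisfying_def assignment_def by blast

lemma NOR_rule: "satisfying s A \<Longrightarrow> v < nverts s \<Longrightarrow> lab s v = NOR_gate \<Longrightarrow>
   ((In v, 2) \<in> A) = ((In v, 0) \<in> A \<or> (In v, 1) \<in> A)"
proof -
  assume a: "satisfying s A" "v < nverts s" "lab s v = NOR_gate"
  define P where "P = {i. (In v, i) \<in> A}"
  have "P \<in> cons NOR_gate" using a unfolding satisfying_def P_def by metis
  then have "P = {} \<or> P = {0,2} \<or> P = {1,2} \<or> P = {0,1,2}" by (simp add: NOR_gate_def)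
  then have "(2 \<in> P) = (0 \<in> P \<or> 1 \<in> P)" by (elim disjE) simp_all
  then show ?thesis unfolding P_def by simp
qed

lemma Fan_rule: "satisfying s A \<Longrightarrow> v < nverts s \<Longrightarrow> lab s v = fanout_gate k \<Longrightarrow> 1 \<le> j \<Longrightarrow> j \<le> k \<Longrightarrow>
   ((In v, j) \<in> A) = ((In v, 0) \<notin> A)"
proof -
  assume a: "satisfying s A" "v < nverts s" "lab s v = fanout_gate k" "1 \<le> j" "j \<le> k"
  define P where "P = {i. (In v, i) \<in> A}"
  have "P \<in> cons (fanout_gate k)" using a unfolding satisfying_def P_def by metis
  then have "P = {0} \<or> P = {1..k}" by (simp add: fanout_gate_def)
  then have "(j \<in> P) = (0 \<notin> P)" using a(4,5) by (elim disjE) simp_all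
  then show ?thesis unfolding P_def by simp
qed

lemma ports_sub: "A \<subseteq> darts s \<Longrightarrow> v < nverts s \<Longrightarrow> i \<in> {i. (In v, i) \<in> A} \<Longrightarrow> i < arity (lab s v)"
  unfolding darts_def by auto

lemma NOR_local: "A \<subseteq> darts s \<Longrightarrow> v < nverts s \<Longrightarrow> lab s v = NOR_gate \<Longrightarrow>
   ({i. (In v, i) \<in> A} \<in> cons NOR_gate) = (((In v, 2) \<in> A) = ((In v, 0) \<in> A \<or> (In v, 1) \<in> A))"
proof -
  assume a: "A \<subseteq> darts s" "v < nverts s" "lab s v = NOR_gate"
  define P where "P = {i. (In v, i) \<in> A}"
  have sub: "\<And>i. i \<in> P \<Longrightarrow> i < 3" using ports_sub[OF a(1,2)] a(3) unfolding P_def by (auto simp: NOR_gate_def)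
  have sub3: "\<And>i. i \<in> P \<Longrightarrow> i = 0 \<or> i = 1 \<or> i = 2"
  proof -
    fix i :: nat assume "i \<in> P" with sub have "i < 3" by blast
    then show "i = 0 \<or> i = 1 \<or> i = 2" by presburger
  qed
  have "(P \<in> {{}, {0,2}, {1,2}, {0,1,2}}) = ((2 \<in> P) = (0 \<in> P \<or> 1 \<in> P))"
  proof
    assume "P \<in> {{}, {0,2}, {1,2}, {0,1,2}}"
    then have "P = {} \<or> P = {0,2} \<or> P = {1,2} \<or> P = {0,1,2}" by simp
    then show "(2 \<in> P) = (0 \<in> P \<or> 1 \<in> P)" by (elim disjE) simp_all
  next
    assume h: "(2 \<in> P) = (0 \<in> P \<or> 1 \<in> P)"
    show "P \<in> {{}, {0,2}, {1,2}, {0,1,2}}"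
    proof (cases "0 \<in> P"; cases "1 \<in> P")
      assume "0 \<in> P" "1 \<in> P" then have "P = {0,1,2}" using h sub3 by blast
      then show ?thesis by simp
    next
      assume "0 \<in> P" "1 \<notin> P" then have "P = {0,2}" using h sub3 by blast
      then show ?thesis by simp
    next
      assume "0 \<notin> P" "1 \<in> P" then have "P = {1,2}" using h sub3 by blast
      then show ?thesis by simp
    next
      assume "0 \<notin> P" "1 \<notin> P" then have "P = {}" using h sub3 by blast
      then show ?thesis by simp
    qed
  qed
  then show ?thesis using a(3) unfolding P_def by (simp add: NOR_gate_def)
qed

lemma Fan_local: "A \<subseteq> darts s \<Longrightarrow> v < nverts s \<Longrightarrow> lab s v = fanout_gate k \<Longrightarrow> 1 \<le> k \<Longrightarrow>
   ({i. (In v, i) \<in> A} \<in> cons (fanout_gate k)) = (\<forall>j\<in>set [1..<Suc k]. ((In v, j) \<in> A) = ((In v, 0) \<notin> A))"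
proof -
  assume a: "A \<subseteq> darts s" "v < nverts s" "lab s v = fanout_gate k" "1 \<le> k"
  define P where "P = {i. (In v, i) \<in> A}"
  have sub: "\<And>i. i \<in> P \<Longrightarrow> i < Suc k" using ports_sub[OF a(1,2)] a(3) unfolding P_def by (simp add: fanout_gate_def)
  have "(P \<in> {{0}, {1..k}}) = (\<forall>j\<in>set [1..<Suc k]. (j \<in> P) = (0 \<notin> P))"
  proof
    assume "P \<in> {{0}, {1..k}}" then show "\<forall>j\<in>set [1..<Suc k]. (j \<in> P) = (0 \<notin> P)" by auto
  next
    assume h: "\<forall>j\<in>set [1..<Suc k]. (j \<in> P) = (0 \<notin> P)"
    have h': "\<And>i. i \<noteq> 0 \<Longrightarrow> i < Suc k \<Longrightarrow> (i \<in> P) = (0 \<notin> P)"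
    proof -
      fix i :: nat assume "i \<noteq> 0" "i < Suc k"
      then have "i \<in> set [1..<Suc k]" by (auto simp: less_Suc_eq_le)
      then show "(i \<in> P) = (0 \<notin> P)" using h by blast
    qed
    show "P \<in> {{0}, {1..k}}"
    proof (cases "0 \<in> P")
      case True
      have "P = {0}"
      proof (intro set_eqI iffI)
        fix i :: nat assume "i \<in> P" then show "i \<in> {0}" using h'[of i] sub[of i] True by auto
      next
        fix i :: nat assume "i \<in> {0}" then show "i \<in> P" using True by simp
      qed
      then show ?thesis by simp
    next
      case False
      have "P = {1..k}"
      proof (intro set_eqI iffI)
        fix i :: nat assume iP: "i \<in> P"
        then have "i \<noteq> 0" using False by (cases i) auto
        moreover have "i < Suc k" using sub iP by blast
        ultimately show "i \<in> {1..k}" by simp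
      next
        fix i :: nat assume "i \<in> {1..k}" then show "i \<in> P" using h'[of i] False by auto
      qed
      then show ?thesis by simp
    qed
  qed
  then show ?thesis using a(3) unfolding P_def by (simp add: fanout_gate_def)
qed


lemma orbit_pos:
  assumes "l \<noteq> []" "\<forall>i<length l. f (l!i) = l!(Suc i mod length l)" "i < length l"
  shows "(f ^^ k) (l!i) = l!((i + k) mod length l)"
proof (induction k)
  case 0 then show ?case using assms(3) by simp
next
  case (Suc k)
  have "(f ^^ Suc k) (l!i) = f (l!((i + k) mod length l))" using Suc by simp
  also have "\<dots> = l!(Suc ((i + k) mod length l) mod length l)"
    using assms(1,2) by simp
  also have "\<dots> = l!((i + Suc k) mod length l)" by (simp add: mod_Suc_eq)
  finally show ?case .
qed

lemma orbit_set:
  assumes "l \<noteq> []" "\<forall>i<length l. f (l!i) = l!(Suc i mod length l)" "d \<in> set l"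
  shows "{e. \<exists>k. (f ^^ k) d = e} = set l"
proof -
  obtain i where i: "i < length l" "d = l!i" using assms(3) by (metis in_set_conv_nth)
  show ?thesis
  proof (intro set_eqI iffI)
    fix e assume "e \<in> {e. \<exists>k. (f ^^ k) d = e}"
    then obtain k where "(f ^^ k) d = e" by blast
    then have "e = l!((i + k) mod length l)" using orbit_pos[OF assms(1,2) i(1)] i(2) by simp
    then show "e \<in> set l" using assms(1) by simp
  next
    fix e assume "e \<in> set l"
    then obtain j where j: "j < length l" "e = l!j" by (metis in_set_conv_nth)
    have "(f ^^ (j + length l - i)) d = l!((i + (j + length l - i)) mod length l)"
      using orbit_pos[OF assms(1,2) i(1)] i(2) by simp
    also have "(i + (j + length l - i)) mod length l = j" using i(1) j(1) by simp
    finally show "e \<in> {e. \<exists>k. (f ^^ k) d = e}" using j(2) by blast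
  qed
qed

lemma faces_list:
  assumes sub: "set (concat L) \<subseteq> darts s" and cov: "\<forall>d\<in>darts s. d \<in> set (concat L)"
    and dist: "distinct (concat L)"
    and cyc: "\<forall>l\<in>set L. l \<noteq> [] \<and> (\<forall>i<length l. face_step s (l!i) = l!(Suc i mod length l))"
  shows "card (faces s) = length L" "card (darts s) = length (concat L)"
proof -
  have D: "darts s = set (concat L)" using sub cov by blast
  define R where "R = {(d, e). d \<in> darts s \<and> e \<in> darts s \<and> (\<exists>k. (face_step s ^^ k) d = e)}"
  have cls: "R `` {d} = set l" if "l \<in> set L" "d \<in> set l" for l d
  proof -
    have "set l \<subseteq> darts s" using that D by auto
    moreover have "d \<in> darts s" using that D by auto
    ultimately show ?thesis using orbit_set[of l "face_step s" d] cyc that unfolding R_def by auto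
  qed
  have F: "faces s = set ` set L"
  proof -
    have "faces s = (\<Union>d\<in>darts s. {R `` {d}})" unfolding faces_def quotient_def R_def by simp
    also have "\<dots> = set ` set L"
    proof (intro set_eqI iffI)
      fix X assume "X \<in> (\<Union>d\<in>darts s. {R `` {d}})"
      then obtain d where d: "d \<in> darts s" "X = R `` {d}" by blast
      then obtain l where "l \<in> set L" "d \<in> set l" using D by auto
      then show "X \<in> set ` set L" using cls d by auto
    next
      fix X assume "X \<in> set ` set L"
      then obtain l where l: "l \<in> set L" "X = set l" by blast
      have "l \<noteq> []" using cyc l by blast
      then obtain d where dl: "d \<in> set l" by (cases l) auto
      then have "d \<in> darts s" using l D by auto
      moreover have "X = R `` {d}" using cls l dl by auto
      ultimately show "X \<in> (\<Union>d\<in>darts s. {R `` {d}})" by blast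
    qed
    finally show ?thesis .
  qed
  have dl: "distinct L" and inj: "inj_on set (set L)"
  proof -
    have ne: "[] \<notin> set L" using cyc by auto
    have dc: "distinct (removeAll [] L)" "\<forall>ys zs. ys \<in> set L \<and> zs \<in> set L \<and> ys \<noteq> zs \<longrightarrow> set ys \<inter> set zs = {}"
      using dist unfolding distinct_concat_iff by auto
    have "removeAll [] L = L" using ne by (simp add: removeAll_id)
    then show "distinct L" using dc by simp
    show "inj_on set (set L)"
    proof (rule inj_onI)
      fix x y assume xy: "x \<in> set L" "y \<in> set L" "set x = set y"
      show "x = y"
      proof (rule ccontr)
        assume "x \<noteq> y"
        then have "set x \<inter> set y = {}" using dc xy by blast
        then show False using xy ne by (cases x) auto
      qed
    qed
  qed
  show "card (faces s) = length L" using F dl inj by (simp add: card_image distinct_card)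
  show "card (darts s) = length (concat L)" using D dist by (metis distinct_card)
qed

fun conn_ok :: "simulation \<Rightarrow> vtx set \<Rightarrow> (vtx \<times> nat) list \<Rightarrow> bool" where
  "conn_ok s R [] = (verts s \<subseteq> R)"
| "conn_ok s R (d # ds) = (fst d \<in> R \<and> d \<in> darts s \<and> conn_ok s (insert (fst (mate s d)) R) ds)"

lemma conn_ok_reach: "conn_ok s R ds \<Longrightarrow> R \<subseteq> (adj s)\<^sup>* `` {Out} \<Longrightarrow> verts s \<subseteq> (adj s)\<^sup>* `` {Out}"
proof (induction ds arbitrary: R)
  case Nil then show ?case by auto
next
  case (Cons d ds)
  obtain x i where d: "d = (x, i)" by fastforce
  obtain y j where m: "mate s d = (y, j)" by fastforce
  have "(x, y) \<in> adj s" using Cons.prems d m unfolding adj_def by auto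
  moreover have "(Out, x) \<in> (adj s)\<^sup>*" using Cons.prems d by auto
  ultimately have "(Out, y) \<in> (adj s)\<^sup>*" by (meson rtrancl_into_rtrancl)
  then have ins: "insert (fst (mate s d)) R \<subseteq> (adj s)\<^sup>* `` {Out}" using Cons.prems m by auto
  have "conn_ok s (insert (fst (mate s d)) R) ds" using Cons.prems(1) by simp
  then show ?case using ins by (rule Cons.IH)
qed

lemma components_one:
  assumes wf: "wf_sim S s" and c: "conn_ok s {Out} ds"
  shows "card (components s) = 1"
proof -
  have reach: "verts s \<subseteq> (adj s)\<^sup>* `` {Out}" using conn_ok_reach[OF c] by auto
  have mt: "\<And>d. d \<in> darts s \<Longrightarrow> mate s d \<in> darts s \<and> mate s (mate s d) = d"
    using wf unfolding wf_sim_def by blast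
  have adjv: "(x, y) \<in> adj s \<Longrightarrow> x \<in> verts s \<and> y \<in> verts s" for x y
    using mt unfolding adj_def darts_def by fastforce
  have sym: "(x, y) \<in> adj s \<Longrightarrow> (y, x) \<in> adj s" for x y
  proof -
    assume "(x, y) \<in> adj s"
    then obtain i j where "(x, i) \<in> darts s" "mate s (x, i) = (y, j)" unfolding adj_def by blast
    then have "(y, j) \<in> darts s" "mate s (y, j) = (x, i)" using mt by metis+
    then show "(y, x) \<in> adj s" unfolding adj_def by blast
  qed
  have symr: "(x, y) \<in> (adj s)\<^sup>* \<Longrightarrow> (y, x) \<in> (adj s)\<^sup>*" for x y
  proof (induction rule: rtrancl_induct)
    case base then show ?case by simp
  next
    case (step y z) then show ?case using sym by (meson converse_rtrancl_into_rtrancl)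
  qed
  have stay: "(x, y) \<in> (adj s)\<^sup>* \<Longrightarrow> x \<in> verts s \<Longrightarrow> y \<in> verts s" for x y
    by (induction rule: rtrancl_induct) (auto dest: adjv)
  have cl: "(adj s)\<^sup>* `` {x} = verts s" if "x \<in> verts s" for x
  proof (intro set_eqI iffI)
    fix y assume "y \<in> (adj s)\<^sup>* `` {x}" then show "y \<in> verts s" using stay that by auto
  next
    fix y assume "y \<in> verts s"
    then have "(Out, y) \<in> (adj s)\<^sup>*" "(Out, x) \<in> (adj s)\<^sup>*" using reach that by auto
    then have "(x, y) \<in> (adj s)\<^sup>*" using symr by (meson rtrancl_trans)
    then show "y \<in> (adj s)\<^sup>* `` {x}" by simp
  qed
  have "components s = {verts s}"
  proof -
    have "Out \<in> verts s" by (simp add: verts_def)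
    then show ?thesis unfolding components_def quotient_def using cl by auto
  qed
  then show ?thesis by simp
qed

lemma into_sim_eq: "into_sim s A = set (filter (\<lambda>i. (Out, i) \<notin> A) [0..<nout s])"
  by (auto simp: into_sim_def)

lemma finish:
  assumes char: "\<And>A. satisfying s A \<longleftrightarrow> A \<in> set Cs"
    and dist: "distinct (map (\<lambda>C. filter (\<lambda>i. (Out, i) \<notin> C) [0..<nout s]) Cs)"
  shows "parsimonious s" "sim_cons s = (\<lambda>C. set (filter (\<lambda>i. (Out, i) \<notin> C) [0..<nout s])) ` set Cs"
proof -
  have inj: "A = B" if "A \<in> set Cs" "B \<in> set Cs" "into_sim s A = into_sim s B" for A B
  proof -
    have "filter (\<lambda>i. (Out, i) \<notin> A) [0..<nout s] = filter (\<lambda>i. (Out, i) \<notin> B) [0..<nout s]"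
      using that(3) unfolding into_sim_eq
      by (intro sorted_distinct_set_unique) (simp_all add: sorted_wrt_filter)
    then show ?thesis using dist that(1,2) by (metis (no_types, lifting) distinct_map inj_onD)
  qed
  show "sim_cons s = (\<lambda>C. set (filter (\<lambda>i. (Out, i) \<notin> C) [0..<nout s])) ` set Cs"
    unfolding sim_cons_def char into_sim_eq by auto
  show "parsimonious s" unfolding parsimonious_def sim_cons_def char using inj by blast
qed


lemma cyc_zip:
  assumes "\<forall>p\<in>set (zip l (rotate1 l)). f (fst p) = snd p"
  shows "\<forall>i<length l. f (l!i) = l!(Suc i mod length l)"
proof (intro allI impI)
  fix i assume i: "i < length l"
  then have "(l!i, rotate1 l ! i) \<in> set (zip l (rotate1 l))"
    by (metis in_set_zip fst_conv snd_conv length_rotate1)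
  then have "f (l!i) = rotate1 l ! i" using assms by fastforce
  then show "f (l!i) = l!(Suc i mod length l)" using i by (simp add: nth_rotate1)
qed

lemma faces_list':
  assumes "set (concat L) \<subseteq> darts s" and "\<forall>d\<in>darts s. d \<in> set (concat L)"
    and "distinct (concat L)"
    and cyc: "\<forall>l\<in>set L. l \<noteq> [] \<and> (\<forall>p\<in>set (zip l (rotate1 l)). face_step s (fst p) = snd p)"
  shows "card (faces s) = length L \<and> card (darts s) = length (concat L)"
  using faces_list[OF assms(1-3)] cyc cyc_zip by blast


lemma arity_NOR [simp]: "arity NOR_gate = 3" by (simp add: NOR_gate_def)
lemma arity_fan [simp]: "arity (fanout_gate k) = Suc k" by (simp add: fanout_gate_def)


declare One_nat_def [simp del]

definition ORx_ml :: "((vtx \<times> nat) \<times> (vtx \<times> nat)) list" where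
  "ORx_ml = [((Out, 0), (In 0, 1)), ((Out, 1), (In 0, 0)), ((Out, 2), (In 1, 2)), ((In 0, 0), (Out, 1)), ((In 0, 1), (Out, 0)), ((In 0, 2), (In 2, 0)), ((In 1, 0), (In 2, 2)), ((In 1, 1), (In 2, 1)), ((In 1, 2), (Out, 2)), ((In 2, 0), (In 0, 2)), ((In 2, 1), (In 1, 1)), ((In 2, 2), (In 1, 0))]"

definition ORx_s :: simulation where
  "ORx_s = \<lparr>nverts = 3, lab = (\<lambda>v. if v < 2 then NOR_gate else (fanout_gate 2)), nout = 3, mate = (\<lambda>d. case map_of ORx_ml d of None \<Rightarrow> d | Some e \<Rightarrow> e)\<rparr>"

lemma ORx_darts: "darts ORx_s = set [(Out, 0), (Out, 1), (Out, 2), (In 0, 0), (In 0, 1), (In 0, 2), (In 1, 0), (In 1, 1), (In 1, 2), (In 2, 0), (In 2, 1), (In 2, 2)]"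
  unfolding darts_eq darts_list_def by (simp add: ORx_s_def NOR_gate_def fanout_gate_def upt_add1)

lemma ORx_mate: "mate ORx_s = (\<lambda>d. case map_of ORx_ml d of None \<Rightarrow> d | Some e \<Rightarrow> e)" by (simp add: ORx_s_def)

lemma ORx_nverts: "nverts ORx_s = 3" by (simp add: ORx_s_def)

lemma ORx_nout: "nout ORx_s = 3" by (simp add: ORx_s_def)

lemma ORx_lab: "lab ORx_s = (\<lambda>v. if v < 2 then NOR_gate else (fanout_gate 2))" by (simp add: ORx_s_def)

lemma ORx_mate_eqs: "mate ORx_s (Out, 0) = (In 0, 1)" "mate ORx_s (Out, 1) = (In 0, 0)" "mate ORx_s (Out, 2) = (In 1, 2)" "mate ORx_s (In 0, 0) = (Out, 1)" "mate ORx_s (In 0, 1) = (Out, 0)" "mate ORx_s (In 0, 2) = (In 2, 0)" "mate ORx_s (In 1, 0) = (In 2, 2)" "mate ORx_s (In 1, 1) = (In 2, 1)" "mate ORx_s (In 1, 2) = (Out, 2)" "mate ORx_s (In 2, 0) = (In 0, 2)" "mate ORx_s (In 2, 1) = (In 1, 1)" "mate ORx_s (In 2, 2) = (In 1, 0)"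
  by (simp_all add: ORx_mate ORx_ml_def)

lemma ORx_wf: "wf_sim (insert NOR_gate {fanout_gate k | k. k \<ge> 1}) ORx_s"
proof -
  have "lab ORx_s v \<in> {NOR_gate, fanout_gate 2}" for v by (simp add: ORx_lab)
  moreover have "{NOR_gate, fanout_gate 2} \<subseteq> insert NOR_gate {fanout_gate k | k. k \<ge> 1}" by auto
  ultimately have L: "\<forall>v < nverts ORx_s. lab ORx_s v \<in> insert NOR_gate {fanout_gate k | k. k \<ge> 1}" by blast
  have M: "\<forall>d \<in> darts ORx_s. mate ORx_s d \<in> darts ORx_s \<and> mate ORx_s (mate ORx_s d) = d \<and> mate ORx_s d \<noteq> d"
    by (simp add: ORx_darts ORx_mate_eqs ORx_nverts ORx_nout ORx_lab)
  have O: "\<forall>i < nout ORx_s. fst (mate ORx_s (Out, i)) \<noteq> Out"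
    unfolding all_less_upt by (simp add: ORx_darts ORx_mate_eqs ORx_nverts ORx_nout ORx_lab upt_add1)
  show ?thesis unfolding wf_sim_def using L M O by blast
qed

lemma ORx_faces: "card (faces ORx_s) = 4 \<and> card (darts ORx_s) = 12"
proof -
  have h1: "set (concat [[(Out, 0), (In 0, 2), (In 2, 1), (In 1, 2)], [(Out, 1), (In 0, 1)], [(Out, 2), (In 1, 0), (In 2, 0), (In 0, 0)], [(In 1, 1), (In 2, 2)]]) \<subseteq> darts ORx_s" by (simp add: ORx_darts)
  have h2: "\<forall>d\<in>darts ORx_s. d \<in> set (concat [[(Out, 0), (In 0, 2), (In 2, 1), (In 1, 2)], [(Out, 1), (In 0, 1)], [(Out, 2), (In 1, 0), (In 2, 0), (In 0, 0)], [(In 1, 1), (In 2, 2)]])" by (simp add: ORx_darts)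
  have h3: "distinct (concat ([[(Out, 0), (In 0, 2), (In 2, 1), (In 1, 2)], [(Out, 1), (In 0, 1)], [(Out, 2), (In 1, 0), (In 2, 0), (In 0, 0)], [(In 1, 1), (In 2, 2)]] :: (vtx \<times> nat) list list))" by simp
  have h4: "\<forall>l\<in>set [[(Out, 0), (In 0, 2), (In 2, 1), (In 1, 2)], [(Out, 1), (In 0, 1)], [(Out, 2), (In 1, 0), (In 2, 0), (In 0, 0)], [(In 1, 1), (In 2, 2)]]. l \<noteq> [] \<and> (\<forall>p\<in>set (zip l (rotate1 l)). face_step ORx_s (fst p) = snd p)"
      by (simp add: face_step_def rot_def ORx_darts ORx_mate_eqs ORx_nverts ORx_nout ORx_lab upt_add1)
  show ?thesis using faces_list'[OF h1 h2 h3 h4] by simp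
qed

lemma ORx_planar: "planar ORx_s"
proof -
  have C: "card (components ORx_s) = 1"
    by (rule components_one[OF ORx_wf, of "[(Out, 0), (Out, 2), (In 0, 2)]"]) (simp add: ORx_darts ORx_mate_eqs ORx_nverts ORx_nout ORx_lab verts_eq upt_add1)
  have I: "{x \<in> verts ORx_s. ar ORx_s x = 0} = {}" by (auto simp: verts_def ORx_darts ORx_mate_eqs ORx_nverts ORx_nout ORx_lab NOR_gate_def fanout_gate_def split: if_splits)
  show ?thesis unfolding planar_def card_verts C I using ORx_faces by (simp add: ORx_nverts)
qed

definition ORx_C00 :: "(vtx \<times> nat) set" where "ORx_C00 = {(Out, 0), (Out, 1), (In 1, 0), (In 1, 1), (In 1, 2), (In 2, 0)}"

definition ORx_C01 :: "(vtx \<times> nat) set" where "ORx_C01 = {(Out, 0), (Out, 2), (In 0, 0), (In 0, 2), (In 2, 1), (In 2, 2)}"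

definition ORx_C10 :: "(vtx \<times> nat) set" where "ORx_C10 = {(Out, 1), (Out, 2), (In 0, 1), (In 0, 2), (In 2, 1), (In 2, 2)}"

definition ORx_C11 :: "(vtx \<times> nat) set" where "ORx_C11 = {(Out, 2), (In 0, 0), (In 0, 1), (In 0, 2), (In 2, 1), (In 2, 2)}"

definition ORx_C :: "bool \<Rightarrow> bool \<Rightarrow> (vtx \<times> nat) set" where
  "ORx_C a b = (if a then (if b then ORx_C00 else ORx_C01) else (if b then ORx_C10 else ORx_C11))"

lemma ORx_C00_sat: "satisfying ORx_s ORx_C00"
proof -
  have sub: "ORx_C00 \<subseteq> darts ORx_s" by (simp add: ORx_C00_def ORx_darts)
  have M: "\<forall>d\<in>darts ORx_s. (d \<in> ORx_C00) \<noteq> (mate ORx_s d \<in> ORx_C00)" by (simp add: ORx_darts ORx_mate_eqs ORx_nverts ORx_nout ORx_lab ORx_C00_def)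
  have V: "\<forall>v<nverts ORx_s. {i. (In v, i) \<in> ORx_C00} \<in> cons (lab ORx_s v)"
    unfolding all_less_upt
    apply (simp add: ORx_nverts upt_add1)
    apply (simp add: NOR_local[OF sub] Fan_local[OF sub] ORx_nverts ORx_lab upt_add1)
    apply (simp add: ORx_C00_def upt_add1)
    done
  show ?thesis unfolding satisfying_def assignment_def using sub M V by blast
qed

lemma ORx_C01_sat: "satisfying ORx_s ORx_C01"
proof -
  have sub: "ORx_C01 \<subseteq> darts ORx_s" by (simp add: ORx_C01_def ORx_darts)
  have M: "\<forall>d\<in>darts ORx_s. (d \<in> ORx_C01) \<noteq> (mate ORx_s d \<in> ORx_C01)" by (simp add: ORx_darts ORx_mate_eqs ORx_nverts ORx_nout ORx_lab ORx_C01_def)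
  have V: "\<forall>v<nverts ORx_s. {i. (In v, i) \<in> ORx_C01} \<in> cons (lab ORx_s v)"
    unfolding all_less_upt
    apply (simp add: ORx_nverts upt_add1)
    apply (simp add: NOR_local[OF sub] Fan_local[OF sub] ORx_nverts ORx_lab upt_add1)
    apply (simp add: ORx_C01_def upt_add1)
    done
  show ?thesis unfolding satisfying_def assignment_def using sub M V by blast
qed

lemma ORx_C10_sat: "satisfying ORx_s ORx_C10"
proof -
  have sub: "ORx_C10 \<subseteq> darts ORx_s" by (simp add: ORx_C10_def ORx_darts)
  have M: "\<forall>d\<in>darts ORx_s. (d \<in> ORx_C10) \<noteq> (mate ORx_s d \<in> ORx_C10)" by (simp add: ORx_darts ORx_mate_eqs ORx_nverts ORx_nout ORx_lab ORx_C10_def)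
  have V: "\<forall>v<nverts ORx_s. {i. (In v, i) \<in> ORx_C10} \<in> cons (lab ORx_s v)"
    unfolding all_less_upt
    apply (simp add: ORx_nverts upt_add1)
    apply (simp add: NOR_local[OF sub] Fan_local[OF sub] ORx_nverts ORx_lab upt_add1)
    apply (simp add: ORx_C10_def upt_add1)
    done
  show ?thesis unfolding satisfying_def assignment_def using sub M V by blast
qed

lemma ORx_C11_sat: "satisfying ORx_s ORx_C11"
proof -
  have sub: "ORx_C11 \<subseteq> darts ORx_s" by (simp add: ORx_C11_def ORx_darts)
  have M: "\<forall>d\<in>darts ORx_s. (d \<in> ORx_C11) \<noteq> (mate ORx_s d \<in> ORx_C11)" by (simp add: ORx_darts ORx_mate_eqs ORx_nverts ORx_nout ORx_lab ORx_C11_def)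
  have V: "\<forall>v<nverts ORx_s. {i. (In v, i) \<in> ORx_C11} \<in> cons (lab ORx_s v)"
    unfolding all_less_upt
    apply (simp add: ORx_nverts upt_add1)
    apply (simp add: NOR_local[OF sub] Fan_local[OF sub] ORx_nverts ORx_lab upt_add1)
    apply (simp add: ORx_C11_def upt_add1)
    done
  show ?thesis unfolding satisfying_def assignment_def using sub M V by blast
qed

lemma ORx_sat_imp:
  assumes sat: "satisfying ORx_s A"
  shows "A = ORx_C ((Out, 0) \<in> A) ((Out, 1) \<in> A)"
proof -
  have r0: "((In 0, 1) \<in> A) = ((Out, 0) \<notin> A)"
    by (rule Mate_rule[OF sat, of "(Out, 0)"]) (simp_all add: ORx_darts ORx_mate_eqs ORx_nverts ORx_nout ORx_lab)
  have r1: "((In 0, 0) \<in> A) = ((Out, 1) \<notin> A)"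
    by (rule Mate_rule[OF sat, of "(Out, 1)"]) (simp_all add: ORx_darts ORx_mate_eqs ORx_nverts ORx_nout ORx_lab)
  have r2: "((In 2, 0) \<in> A) = ((In 0, 2) \<notin> A)"
    by (rule Mate_rule[OF sat, of "(In 0, 2)"]) (simp_all add: ORx_darts ORx_mate_eqs ORx_nverts ORx_nout ORx_lab)
  have r3: "((In 1, 0) \<in> A) = ((In 2, 2) \<notin> A)"
    by (rule Mate_rule[OF sat, of "(In 2, 2)"]) (simp_all add: ORx_darts ORx_mate_eqs ORx_nverts ORx_nout ORx_lab)
  have r4: "((In 1, 1) \<in> A) = ((In 2, 1) \<notin> A)"
    by (rule Mate_rule[OF sat, of "(In 2, 1)"]) (simp_all add: ORx_darts ORx_mate_eqs ORx_nverts ORx_nout ORx_lab)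
  have r5: "((Out, 2) \<in> A) = ((In 1, 2) \<notin> A)"
    by (rule Mate_rule[OF sat, of "(In 1, 2)"]) (simp_all add: ORx_darts ORx_mate_eqs ORx_nverts ORx_nout ORx_lab)
  have r6: "((In 0, 2) \<in> A) = ((In 0, 0) \<in> A \<or> (In 0, 1) \<in> A)"
    by (rule NOR_rule[OF sat]) (simp_all add: ORx_nverts ORx_lab)
  have r7: "((In 1, 2) \<in> A) = ((In 1, 0) \<in> A \<or> (In 1, 1) \<in> A)"
    by (rule NOR_rule[OF sat]) (simp_all add: ORx_nverts ORx_lab)
  have r8: "((In 2, 1) \<in> A) = ((In 2, 0) \<notin> A)"
    by (rule Fan_rule[OF sat, of 2 2 1]) (simp_all add: ORx_nverts ORx_lab)
  have r9: "((In 2, 2) \<in> A) = ((In 2, 0) \<notin> A)"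
    by (rule Fan_rule[OF sat, of 2 2 2]) (simp_all add: ORx_nverts ORx_lab)
  have sub: "A \<subseteq> darts ORx_s" using sat unfolding satisfying_def assignment_def by blast
  have sub2: "ORx_C a b \<subseteq> darts ORx_s" for a b by (simp add: ORx_C_def ORx_C00_def ORx_C01_def ORx_C10_def ORx_C11_def ORx_darts)
  have E: "\<forall>d\<in>darts ORx_s. (d \<in> A) = (d \<in> ORx_C ((Out, 0) \<in> A) ((Out, 1) \<in> A))"
    by (cases "(Out, 0) \<in> A"; cases "(Out, 1) \<in> A"; simp add: ORx_darts ORx_C_def ORx_C00_def ORx_C01_def ORx_C10_def ORx_C11_def r0 r1 r2 r3 r4 r5 r6 r7 r8 r9)
  show ?thesis using sub sub2 E by blast
qed

lemma ORx_char: "satisfying ORx_s A \<longleftrightarrow> A \<in> set [ORx_C00, ORx_C10, ORx_C01, ORx_C11]"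
proof
  assume "satisfying ORx_s A"
  then have "A = ORx_C ((Out, 0) \<in> A) ((Out, 1) \<in> A)" by (rule ORx_sat_imp)
  then show "A \<in> set [ORx_C00, ORx_C10, ORx_C01, ORx_C11]" by (simp add: ORx_C_def split: if_splits)
next
  assume "A \<in> set [ORx_C00, ORx_C10, ORx_C01, ORx_C11]"
  then show "satisfying ORx_s A" using ORx_C00_sat ORx_C01_sat ORx_C10_sat ORx_C11_sat by auto
qed

lemma ORx_pps: "planar_parsimoniously_simulates (insert NOR_gate {fanout_gate k | k. k \<ge> 1}) OR_gate"
proof -
  have D: "distinct (map (\<lambda>C. filter (\<lambda>i. (Out, i) \<notin> C) [0..<nout ORx_s]) [ORx_C00, ORx_C10, ORx_C01, ORx_C11])"
    by (simp add: ORx_nout ORx_C00_def ORx_C01_def ORx_C10_def ORx_C11_def upt_add1)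
  have P: "parsimonious ORx_s" by (rule finish(1)[OF ORx_char D])
  have SC: "sim_cons ORx_s = (\<lambda>C. set (filter (\<lambda>i. (Out, i) \<notin> C) [0..<nout ORx_s])) ` set [ORx_C00, ORx_C10, ORx_C01, ORx_C11]"
    by (rule finish(2)[OF ORx_char D])
  have "simulates ORx_s OR_gate" unfolding simulates_def SC
    apply (rule conjI)
     apply (simp add: OR_gate_def ORx_nout)
    apply (rule exI[of _ 0])
    apply (simp add: OR_gate_def ORx_nout ORx_C00_def ORx_C01_def ORx_C10_def ORx_C11_def upt_add1 insert_commute)
    done
  then show ?thesis unfolding planar_parsimoniously_simulates_def using ORx_wf ORx_planar P by blast
qed


definition ANDx_ml :: "((vtx \<times> nat) \<times> (vtx \<times> nat)) list" where
  "ANDx_ml = [((Out, 0), (In 3, 0)), ((Out, 1), (In 4, 0)), ((Out, 2), (In 2, 2)), ((In 0, 0), (In 3, 2)), ((In 0, 1), (In 3, 1)), ((In 0, 2), (In 2, 1)), ((In 1, 0), (In 4, 2)), ((In 1, 1), (In 4, 1)), ((In 1, 2), (In 2, 0)), ((In 2, 0), (In 1, 2)), ((In 2, 1), (In 0, 2)), ((In 2, 2), (Out, 2)), ((In 3, 0), (Out, 0)), ((In 3, 1), (In 0, 1)), ((In 3, 2), (In 0, 0)), ((In 4, 0), (Out, 1)), ((In 4, 1), (In 1, 1)), ((In 4, 2), (In 1, 0))]"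

definition ANDx_s :: simulation where
  "ANDx_s = \<lparr>nverts = 5, lab = (\<lambda>v. if v < 3 then NOR_gate else (fanout_gate 2)), nout = 3, mate = (\<lambda>d. case map_of ANDx_ml d of None \<Rightarrow> d | Some e \<Rightarrow> e)\<rparr>"

lemma ANDx_darts: "darts ANDx_s = set [(Out, 0), (Out, 1), (Out, 2), (In 0, 0), (In 0, 1), (In 0, 2), (In 1, 0), (In 1, 1), (In 1, 2), (In 2, 0), (In 2, 1), (In 2, 2), (In 3, 0), (In 3, 1), (In 3, 2), (In 4, 0), (In 4, 1), (In 4, 2)]"
  unfolding darts_eq darts_list_def by (simp add: ANDx_s_def NOR_gate_def fanout_gate_def upt_add1)

lemma ANDx_mate: "mate ANDx_s = (\<lambda>d. case map_of ANDx_ml d of None \<Rightarrow> d | Some e \<Rightarrow> e)" by (simp add: ANDx_s_def)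

lemma ANDx_nverts: "nverts ANDx_s = 5" by (simp add: ANDx_s_def)

lemma ANDx_nout: "nout ANDx_s = 3" by (simp add: ANDx_s_def)

lemma ANDx_lab: "lab ANDx_s = (\<lambda>v. if v < 3 then NOR_gate else (fanout_gate 2))" by (simp add: ANDx_s_def)

lemma ANDx_mate_eqs: "mate ANDx_s (Out, 0) = (In 3, 0)" "mate ANDx_s (Out, 1) = (In 4, 0)" "mate ANDx_s (Out, 2) = (In 2, 2)" "mate ANDx_s (In 0, 0) = (In 3, 2)" "mate ANDx_s (In 0, 1) = (In 3, 1)" "mate ANDx_s (In 0, 2) = (In 2, 1)" "mate ANDx_s (In 1, 0) = (In 4, 2)" "mate ANDx_s (In 1, 1) = (In 4, 1)" "mate ANDx_s (In 1, 2) = (In 2, 0)" "mate ANDx_s (In 2, 0) = (In 1, 2)" "mate ANDx_s (In 2, 1) = (In 0, 2)" "mate ANDx_s (In 2, 2) = (Out, 2)" "mate ANDx_s (In 3, 0) = (Out, 0)" "mate ANDx_s (In 3, 1) = (In 0, 1)" "mate ANDx_s (In 3, 2) = (In 0, 0)" "mate ANDx_s (In 4, 0) = (Out, 1)" "mate ANDx_s (In 4, 1) = (In 1, 1)" "mate ANDx_s (In 4, 2) = (In 1, 0)"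
  by (simp_all add: ANDx_mate ANDx_ml_def)

lemma ANDx_wf: "wf_sim (insert NOR_gate {fanout_gate k | k. k \<ge> 1}) ANDx_s"
proof -
  have "lab ANDx_s v \<in> {NOR_gate, fanout_gate 2}" for v by (simp add: ANDx_lab)
  moreover have "{NOR_gate, fanout_gate 2} \<subseteq> insert NOR_gate {fanout_gate k | k. k \<ge> 1}" by auto
  ultimately have L: "\<forall>v < nverts ANDx_s. lab ANDx_s v \<in> insert NOR_gate {fanout_gate k | k. k \<ge> 1}" by blast
  have M: "\<forall>d \<in> darts ANDx_s. mate ANDx_s d \<in> darts ANDx_s \<and> mate ANDx_s (mate ANDx_s d) = d \<and> mate ANDx_s d \<noteq> d"
    by (simp add: ANDx_darts ANDx_mate_eqs ANDx_nverts ANDx_nout ANDx_lab)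
  have O: "\<forall>i < nout ANDx_s. fst (mate ANDx_s (Out, i)) \<noteq> Out"
    unfolding all_less_upt by (simp add: ANDx_darts ANDx_mate_eqs ANDx_nverts ANDx_nout ANDx_lab upt_add1)
  show ?thesis unfolding wf_sim_def using L M O by blast
qed

lemma ANDx_faces: "card (faces ANDx_s) = 5 \<and> card (darts ANDx_s) = 18"
proof -
  have h1: "set (concat [[(Out, 0), (In 3, 1), (In 0, 2), (In 2, 2)], [(Out, 1), (In 4, 1), (In 1, 2), (In 2, 1), (In 0, 0), (In 3, 0)], [(Out, 2), (In 2, 0), (In 1, 0), (In 4, 0)], [(In 0, 1), (In 3, 2)], [(In 1, 1), (In 4, 2)]]) \<subseteq> darts ANDx_s" by (simp add: ANDx_darts)
  have h2: "\<forall>d\<in>darts ANDx_s. d \<in> set (concat [[(Out, 0), (In 3, 1), (In 0, 2), (In 2, 2)], [(Out, 1), (In 4, 1), (In 1, 2), (In 2, 1), (In 0, 0), (In 3, 0)], [(Out, 2), (In 2, 0), (In 1, 0), (In 4, 0)], [(In 0, 1), (In 3, 2)], [(In 1, 1), (In 4, 2)]])" by (simp add: ANDx_darts)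
  have h3: "distinct (concat ([[(Out, 0), (In 3, 1), (In 0, 2), (In 2, 2)], [(Out, 1), (In 4, 1), (In 1, 2), (In 2, 1), (In 0, 0), (In 3, 0)], [(Out, 2), (In 2, 0), (In 1, 0), (In 4, 0)], [(In 0, 1), (In 3, 2)], [(In 1, 1), (In 4, 2)]] :: (vtx \<times> nat) list list))" by simp
  have h4: "\<forall>l\<in>set [[(Out, 0), (In 3, 1), (In 0, 2), (In 2, 2)], [(Out, 1), (In 4, 1), (In 1, 2), (In 2, 1), (In 0, 0), (In 3, 0)], [(Out, 2), (In 2, 0), (In 1, 0), (In 4, 0)], [(In 0, 1), (In 3, 2)], [(In 1, 1), (In 4, 2)]]. l \<noteq> [] \<and> (\<forall>p\<in>set (zip l (rotate1 l)). face_step ANDx_s (fst p) = snd p)"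
      by (simp add: face_step_def rot_def ANDx_darts ANDx_mate_eqs ANDx_nverts ANDx_nout ANDx_lab upt_add1)
  show ?thesis using faces_list'[OF h1 h2 h3 h4] by simp
qed

lemma ANDx_planar: "planar ANDx_s"
proof -
  have C: "card (components ANDx_s) = 1"
    by (rule components_one[OF ANDx_wf, of "[(Out, 0), (Out, 1), (Out, 2), (In 2, 0), (In 2, 1)]"]) (simp add: ANDx_darts ANDx_mate_eqs ANDx_nverts ANDx_nout ANDx_lab verts_eq upt_add1)
  have I: "{x \<in> verts ANDx_s. ar ANDx_s x = 0} = {}" by (auto simp: verts_def ANDx_darts ANDx_mate_eqs ANDx_nverts ANDx_nout ANDx_lab NOR_gate_def fanout_gate_def split: if_splits)
  show ?thesis unfolding planar_def card_verts C I using ANDx_faces by (simp add: ANDx_nverts)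
qed

definition ANDx_C00 :: "(vtx \<times> nat) set" where "ANDx_C00 = {(Out, 0), (Out, 1), (In 2, 0), (In 2, 1), (In 2, 2), (In 3, 1), (In 3, 2), (In 4, 1), (In 4, 2)}"

definition ANDx_C01 :: "(vtx \<times> nat) set" where "ANDx_C01 = {(Out, 0), (In 1, 0), (In 1, 1), (In 1, 2), (In 2, 1), (In 2, 2), (In 3, 1), (In 3, 2), (In 4, 0)}"

definition ANDx_C10 :: "(vtx \<times> nat) set" where "ANDx_C10 = {(Out, 1), (In 0, 0), (In 0, 1), (In 0, 2), (In 2, 0), (In 2, 2), (In 3, 0), (In 4, 1), (In 4, 2)}"

definition ANDx_C11 :: "(vtx \<times> nat) set" where "ANDx_C11 = {(Out, 2), (In 0, 0), (In 0, 1), (In 0, 2), (In 1, 0), (In 1, 1), (In 1, 2), (In 3, 0), (In 4, 0)}"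

definition ANDx_C :: "bool \<Rightarrow> bool \<Rightarrow> (vtx \<times> nat) set" where
  "ANDx_C a b = (if a then (if b then ANDx_C00 else ANDx_C01) else (if b then ANDx_C10 else ANDx_C11))"

lemma ANDx_C00_sat: "satisfying ANDx_s ANDx_C00"
proof -
  have sub: "ANDx_C00 \<subseteq> darts ANDx_s" by (simp add: ANDx_C00_def ANDx_darts)
  have M: "\<forall>d\<in>darts ANDx_s. (d \<in> ANDx_C00) \<noteq> (mate ANDx_s d \<in> ANDx_C00)" by (simp add: ANDx_darts ANDx_mate_eqs ANDx_nverts ANDx_nout ANDx_lab ANDx_C00_def)
  have V: "\<forall>v<nverts ANDx_s. {i. (In v, i) \<in> ANDx_C00} \<in> cons (lab ANDx_s v)"
    unfolding all_less_upt
    apply (simp add: ANDx_nverts upt_add1)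
    apply (simp add: NOR_local[OF sub] Fan_local[OF sub] ANDx_nverts ANDx_lab upt_add1)
    apply (simp add: ANDx_C00_def upt_add1)
    done
  show ?thesis unfolding satisfying_def assignment_def using sub M V by blast
qed

lemma ANDx_C01_sat: "satisfying ANDx_s ANDx_C01"
proof -
  have sub: "ANDx_C01 \<subseteq> darts ANDx_s" by (simp add: ANDx_C01_def ANDx_darts)
  have M: "\<forall>d\<in>darts ANDx_s. (d \<in> ANDx_C01) \<noteq> (mate ANDx_s d \<in> ANDx_C01)" by (simp add: ANDx_darts ANDx_mate_eqs ANDx_nverts ANDx_nout ANDx_lab ANDx_C01_def)
  have V: "\<forall>v<nverts ANDx_s. {i. (In v, i) \<in> ANDx_C01} \<in> cons (lab ANDx_s v)"
    unfolding all_less_upt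
    apply (simp add: ANDx_nverts upt_add1)
    apply (simp add: NOR_local[OF sub] Fan_local[OF sub] ANDx_nverts ANDx_lab upt_add1)
    apply (simp add: ANDx_C01_def upt_add1)
    done
  show ?thesis unfolding satisfying_def assignment_def using sub M V by blast
qed

lemma ANDx_C10_sat: "satisfying ANDx_s ANDx_C10"
proof -
  have sub: "ANDx_C10 \<subseteq> darts ANDx_s" by (simp add: ANDx_C10_def ANDx_darts)
  have M: "\<forall>d\<in>darts ANDx_s. (d \<in> ANDx_C10) \<noteq> (mate ANDx_s d \<in> ANDx_C10)" by (simp add: ANDx_darts ANDx_mate_eqs ANDx_nverts ANDx_nout ANDx_lab ANDx_C10_def)
  have V: "\<forall>v<nverts ANDx_s. {i. (In v, i) \<in> ANDx_C10} \<in> cons (lab ANDx_s v)"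
    unfolding all_less_upt
    apply (simp add: ANDx_nverts upt_add1)
    apply (simp add: NOR_local[OF sub] Fan_local[OF sub] ANDx_nverts ANDx_lab upt_add1)
    apply (simp add: ANDx_C10_def upt_add1)
    done
  show ?thesis unfolding satisfying_def assignment_def using sub M V by blast
qed

lemma ANDx_C11_sat: "satisfying ANDx_s ANDx_C11"
proof -
  have sub: "ANDx_C11 \<subseteq> darts ANDx_s" by (simp add: ANDx_C11_def ANDx_darts)
  have M: "\<forall>d\<in>darts ANDx_s. (d \<in> ANDx_C11) \<noteq> (mate ANDx_s d \<in> ANDx_C11)" by (simp add: ANDx_darts ANDx_mate_eqs ANDx_nverts ANDx_nout ANDx_lab ANDx_C11_def)
  have V: "\<forall>v<nverts ANDx_s. {i. (In v, i) \<in> ANDx_C11} \<in> cons (lab ANDx_s v)"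
    unfolding all_less_upt
    apply (simp add: ANDx_nverts upt_add1)
    apply (simp add: NOR_local[OF sub] Fan_local[OF sub] ANDx_nverts ANDx_lab upt_add1)
    apply (simp add: ANDx_C11_def upt_add1)
    done
  show ?thesis unfolding satisfying_def assignment_def using sub M V by blast
qed

lemma ANDx_sat_imp:
  assumes sat: "satisfying ANDx_s A"
  shows "A = ANDx_C ((Out, 0) \<in> A) ((Out, 1) \<in> A)"
proof -
  have r0: "((In 3, 0) \<in> A) = ((Out, 0) \<notin> A)"
    by (rule Mate_rule[OF sat, of "(Out, 0)"]) (simp_all add: ANDx_darts ANDx_mate_eqs ANDx_nverts ANDx_nout ANDx_lab)
  have r1: "((In 4, 0) \<in> A) = ((Out, 1) \<notin> A)"
    by (rule Mate_rule[OF sat, of "(Out, 1)"]) (simp_all add: ANDx_darts ANDx_mate_eqs ANDx_nverts ANDx_nout ANDx_lab)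
  have r2: "((In 0, 0) \<in> A) = ((In 3, 2) \<notin> A)"
    by (rule Mate_rule[OF sat, of "(In 3, 2)"]) (simp_all add: ANDx_darts ANDx_mate_eqs ANDx_nverts ANDx_nout ANDx_lab)
  have r3: "((In 0, 1) \<in> A) = ((In 3, 1) \<notin> A)"
    by (rule Mate_rule[OF sat, of "(In 3, 1)"]) (simp_all add: ANDx_darts ANDx_mate_eqs ANDx_nverts ANDx_nout ANDx_lab)
  have r4: "((In 1, 1) \<in> A) = ((In 4, 1) \<notin> A)"
    by (rule Mate_rule[OF sat, of "(In 4, 1)"]) (simp_all add: ANDx_darts ANDx_mate_eqs ANDx_nverts ANDx_nout ANDx_lab)
  have r5: "((In 1, 0) \<in> A) = ((In 4, 2) \<notin> A)"
    by (rule Mate_rule[OF sat, of "(In 4, 2)"]) (simp_all add: ANDx_darts ANDx_mate_eqs ANDx_nverts ANDx_nout ANDx_lab)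
  have r6: "((In 2, 1) \<in> A) = ((In 0, 2) \<notin> A)"
    by (rule Mate_rule[OF sat, of "(In 0, 2)"]) (simp_all add: ANDx_darts ANDx_mate_eqs ANDx_nverts ANDx_nout ANDx_lab)
  have r7: "((In 2, 0) \<in> A) = ((In 1, 2) \<notin> A)"
    by (rule Mate_rule[OF sat, of "(In 1, 2)"]) (simp_all add: ANDx_darts ANDx_mate_eqs ANDx_nverts ANDx_nout ANDx_lab)
  have r8: "((Out, 2) \<in> A) = ((In 2, 2) \<notin> A)"
    by (rule Mate_rule[OF sat, of "(In 2, 2)"]) (simp_all add: ANDx_darts ANDx_mate_eqs ANDx_nverts ANDx_nout ANDx_lab)
  have r9: "((In 0, 2) \<in> A) = ((In 0, 0) \<in> A \<or> (In 0, 1) \<in> A)"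
    by (rule NOR_rule[OF sat]) (simp_all add: ANDx_nverts ANDx_lab)
  have r10: "((In 1, 2) \<in> A) = ((In 1, 0) \<in> A \<or> (In 1, 1) \<in> A)"
    by (rule NOR_rule[OF sat]) (simp_all add: ANDx_nverts ANDx_lab)
  have r11: "((In 2, 2) \<in> A) = ((In 2, 0) \<in> A \<or> (In 2, 1) \<in> A)"
    by (rule NOR_rule[OF sat]) (simp_all add: ANDx_nverts ANDx_lab)
  have r12: "((In 3, 1) \<in> A) = ((In 3, 0) \<notin> A)"
    by (rule Fan_rule[OF sat, of 3 2 1]) (simp_all add: ANDx_nverts ANDx_lab)
  have r13: "((In 3, 2) \<in> A) = ((In 3, 0) \<notin> A)"
    by (rule Fan_rule[OF sat, of 3 2 2]) (simp_all add: ANDx_nverts ANDx_lab)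
  have r14: "((In 4, 1) \<in> A) = ((In 4, 0) \<notin> A)"
    by (rule Fan_rule[OF sat, of 4 2 1]) (simp_all add: ANDx_nverts ANDx_lab)
  have r15: "((In 4, 2) \<in> A) = ((In 4, 0) \<notin> A)"
    by (rule Fan_rule[OF sat, of 4 2 2]) (simp_all add: ANDx_nverts ANDx_lab)
  have sub: "A \<subseteq> darts ANDx_s" using sat unfolding satisfying_def assignment_def by blast
  have sub2: "ANDx_C a b \<subseteq> darts ANDx_s" for a b by (simp add: ANDx_C_def ANDx_C00_def ANDx_C01_def ANDx_C10_def ANDx_C11_def ANDx_darts)
  have E: "\<forall>d\<in>darts ANDx_s. (d \<in> A) = (d \<in> ANDx_C ((Out, 0) \<in> A) ((Out, 1) \<in> A))"
    by (cases "(Out, 0) \<in> A"; cases "(Out, 1) \<in> A"; simp add: ANDx_darts ANDx_C_def ANDx_C00_def ANDx_C01_def ANDx_C10_def ANDx_C11_def r0 r1 r2 r3 r4 r5 r6 r7 r8 r9 r10 r11 r12 r13 r14 r15)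
  show ?thesis using sub sub2 E by blast
qed

lemma ANDx_char: "satisfying ANDx_s A \<longleftrightarrow> A \<in> set [ANDx_C00, ANDx_C10, ANDx_C01, ANDx_C11]"
proof
  assume "satisfying ANDx_s A"
  then have "A = ANDx_C ((Out, 0) \<in> A) ((Out, 1) \<in> A)" by (rule ANDx_sat_imp)
  then show "A \<in> set [ANDx_C00, ANDx_C10, ANDx_C01, ANDx_C11]" by (simp add: ANDx_C_def split: if_splits)
next
  assume "A \<in> set [ANDx_C00, ANDx_C10, ANDx_C01, ANDx_C11]"
  then show "satisfying ANDx_s A" using ANDx_C00_sat ANDx_C01_sat ANDx_C10_sat ANDx_C11_sat by auto
qed

lemma ANDx_pps: "planar_parsimoniously_simulates (insert NOR_gate {fanout_gate k | k. k \<ge> 1}) AND_gate"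
proof -
  have D: "distinct (map (\<lambda>C. filter (\<lambda>i. (Out, i) \<notin> C) [0..<nout ANDx_s]) [ANDx_C00, ANDx_C10, ANDx_C01, ANDx_C11])"
    by (simp add: ANDx_nout ANDx_C00_def ANDx_C01_def ANDx_C10_def ANDx_C11_def upt_add1)
  have P: "parsimonious ANDx_s" by (rule finish(1)[OF ANDx_char D])
  have SC: "sim_cons ANDx_s = (\<lambda>C. set (filter (\<lambda>i. (Out, i) \<notin> C) [0..<nout ANDx_s])) ` set [ANDx_C00, ANDx_C10, ANDx_C01, ANDx_C11]"
    by (rule finish(2)[OF ANDx_char D])
  have "simulates ANDx_s AND_gate" unfolding simulates_def SC
    apply (rule conjI)
     apply (simp add: AND_gate_def ANDx_nout)
    apply (rule exI[of _ 0])
    apply (simp add: AND_gate_def ANDx_nout ANDx_C00_def ANDx_C01_def ANDx_C10_def ANDx_C11_def upt_add1 insert_commute)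
    done
  then show ?thesis unfolding planar_parsimoniously_simulates_def using ANDx_wf ANDx_planar P by blast
qed


definition CRx_ml :: "((vtx \<times> nat) \<times> (vtx \<times> nat)) list" where
  "CRx_ml = [((Out, 0), (In 15, 0)), ((Out, 1), (In 16, 0)), ((Out, 2), (In 7, 2)), ((Out, 3), (In 11, 2)), ((In 0, 0), (In 16, 1)), ((In 0, 1), (In 15, 4)), ((In 0, 2), (In 12, 0)), ((In 1, 0), (In 12, 1)), ((In 1, 1), (In 15, 3)), ((In 1, 2), (In 3, 1)), ((In 2, 0), (In 16, 2)), ((In 2, 1), (In 12, 2)), ((In 2, 2), (In 3, 0)), ((In 3, 0), (In 2, 2)), ((In 3, 1), (In 1, 2)), ((In 3, 2), (In 17, 0)), ((In 4, 0), (In 16, 3)), ((In 4, 1), (In 17, 4)), ((In 4, 2), (In 13, 0)), ((In 5, 0), (In 16, 4)), ((In 5, 1), (In 13, 2)), ((In 5, 2), (In 7, 0)), ((In 6, 0), (In 13, 1)), ((In 6, 1), (In 17, 3)), ((In 6, 2), (In 7, 1)), ((In 7, 0), (In 5, 2)), ((In 7, 1), (In 6, 2)), ((In 7, 2), (Out, 2)), ((In 8, 0), (In 17, 1)), ((In 8, 1), (In 15, 2)), ((In 8, 2), (In 14, 0)), ((In 9, 0), (In 14, 1)), ((In 9, 1), (In 15, 1)), ((In 9, 2), (In 11, 1)), ((In 10, 0), (In 17, 2)), ((In 10, 1), (In 14, 2)), ((In 10, 2), (In 11, 0)), ((In 11, 0), (In 10, 2)), ((In 11, 1), (In 9, 2)),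 ((In 11, 2), (Out, 3)), ((In 12, 0), (In 0, 2)), ((In 12, 1), (In 1, 0)), ((In 12, 2), (In 2, 1)), ((In 13, 0), (In 4, 2)), ((In 13, 1), (In 6, 0)), ((In 13, 2), (In 5, 1)), ((In 14, 0), (In 8, 2)), ((In 14, 1), (In 9, 0)), ((In 14, 2), (In 10, 1)), ((In 15, 0), (Out, 0)), ((In 15, 1), (In 9, 1)), ((In 15, 2), (In 8, 1)), ((In 15, 3), (In 1, 1)), ((In 15, 4), (In 0, 1)), ((In 16, 0), (Out, 1)), ((In 16, 1), (In 0, 0)), ((In 16, 2), (In 2, 0)), ((In 16, 3), (In 4, 0)), ((In 16, 4), (In 5, 0)), ((In 17, 0), (In 3, 2)), ((In 17, 1), (In 8, 0)), ((In 17, 2), (In 10, 0)), ((In 17, 3), (In 6, 1)), ((In 17, 4), (In 4, 1))]"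

definition CRx_s :: simulation where
  "CRx_s = \<lparr>nverts = 18, lab = (\<lambda>v. if v < 12 then NOR_gate else (if v < 15 then fanout_gate 2 else (fanout_gate 4))), nout = 4, mate = (\<lambda>d. case map_of CRx_ml d of None \<Rightarrow> d | Some e \<Rightarrow> e)\<rparr>"

lemma CRx_darts: "darts CRx_s = set [(Out, 0), (Out, 1), (Out, 2), (Out, 3), (In 0, 0), (In 0, 1), (In 0, 2), (In 1, 0), (In 1, 1), (In 1, 2), (In 2, 0), (In 2, 1), (In 2, 2), (In 3, 0), (In 3, 1), (In 3, 2), (In 4, 0), (In 4, 1), (In 4, 2), (In 5, 0), (In 5, 1), (In 5, 2), (In 6, 0), (In 6, 1), (In 6, 2), (In 7, 0), (In 7, 1), (In 7, 2), (In 8, 0), (In 8, 1), (In 8, 2), (In 9, 0), (In 9, 1), (In 9, 2), (In 10, 0), (In 10, 1), (In 10, 2), (In 11, 0), (In 11, 1), (In 11, 2), (In 12, 0), (In 12, 1), (In 12, 2), (In 13, 0), (In 13, 1), (In 13, 2), (In 14, 0), (In 14, 1), (In 14, 2), (In 15, 0), (In 15, 1), (In 15, 2), (In 15, 3), (In 15, 4), (In 16, 0), (In 16, 1), (In 16, 2), (In 16, 3), (In 16, 4), (In 17, 0), (In 17, 1), (In 17, 2), (In 17, 3), (In 17, 4)]"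
  unfolding darts_eq darts_list_def by (simp add: CRx_s_def NOR_gate_def fanout_gate_def upt_add1)

lemma CRx_mate: "mate CRx_s = (\<lambda>d. case map_of CRx_ml d of None \<Rightarrow> d | Some e \<Rightarrow> e)" by (simp add: CRx_s_def)

lemma CRx_nverts: "nverts CRx_s = 18" by (simp add: CRx_s_def)

lemma CRx_nout: "nout CRx_s = 4" by (simp add: CRx_s_def)

lemma CRx_lab: "lab CRx_s = (\<lambda>v. if v < 12 then NOR_gate else (if v < 15 then fanout_gate 2 else (fanout_gate 4)))" by (simp add: CRx_s_def)

lemma CRx_mate_eqs: "mate CRx_s (Out, 0) = (In 15, 0)" "mate CRx_s (Out, 1) = (In 16, 0)" "mate CRx_s (Out, 2) = (In 7, 2)" "mate CRx_s (Out, 3) = (In 11, 2)" "mate CRx_s (In 0, 0) = (In 16, 1)" "mate CRx_s (In 0, 1) = (In 15, 4)" "mate CRx_s (In 0, 2) = (In 12, 0)" "mate CRx_s (In 1, 0) = (In 12, 1)" "mate CRx_s (In 1, 1) = (In 15, 3)" "mate CRx_s (In 1, 2) = (In 3, 1)" "mate CRx_s (In 2, 0) = (In 16, 2)" "mate CRx_s (In 2, 1) = (In 12, 2)" "mate CRx_s (In 2, 2) = (In 3, 0)" "mate CRx_s (In 3, 0) = (In 2, 2)" "mate CRx_s (In 3, 1) = (In 1, 2)" "mate CRx_s (In 3, 2) = (In 17, 0)" "mate CRx_s (In 4, 0) = (In 16, 3)" "mate CRx_s (In 4, 1) = (In 17, 4)" "mate CRx_s (In 4, 2) = (In 13, 0)"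 "mate CRx_s (In 5, 0) = (In 16, 4)" "mate CRx_s (In 5, 1) = (In 13, 2)" "mate CRx_s (In 5, 2) = (In 7, 0)" "mate CRx_s (In 6, 0) = (In 13, 1)" "mate CRx_s (In 6, 1) = (In 17, 3)" "mate CRx_s (In 6, 2) = (In 7, 1)" "mate CRx_s (In 7, 0) = (In 5, 2)" "mate CRx_s (In 7, 1) = (In 6, 2)" "mate CRx_s (In 7, 2) = (Out, 2)" "mate CRx_s (In 8, 0) = (In 17, 1)" "mate CRx_s (In 8, 1) = (In 15, 2)" "mate CRx_s (In 8, 2) = (In 14, 0)" "mate CRx_s (In 9, 0) = (In 14, 1)" "mate CRx_s (In 9, 1) = (In 15, 1)" "mate CRx_s (In 9, 2) = (In 11, 1)" "mate CRx_s (In 10, 0) = (In 17, 2)" "mate CRx_s (In 10, 1) = (In 14, 2)" "mate CRx_s (In 10, 2) = (In 11, 0)" "mate CRx_s (In 11, 0) = (In 10, 2)" "mate CRx_s (In 11, 1) = (In 9, 2)" "mate CRx_s (In 11, 2) = (Out, 3)" "mate CRx_s (In 12, 0) = (In 0, 2)" "mate CRx_s (In 12, 1) = (In 1, 0)" "mate CRx_s (In 12, 2) = (In 2, 1)" "mate CRx_s (In 13, 0) = (In 4, 2)" "mate CRx_s (In 13, 1) = (In 6, 0)" "mate CRx_s (In 13, 2) = (In 5, 1)" "mate CRx_s (In 14, 0) = (In 8, 2)" "mate CRx_s (In 14, 1) = (In 9, 0)" "mate CRx_s (In 14, 2) = (In 10, 1)" "mate CRx_s (In 15, 0) = (Out,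 0)" "mate CRx_s (In 15, 1) = (In 9, 1)" "mate CRx_s (In 15, 2) = (In 8, 1)" "mate CRx_s (In 15, 3) = (In 1, 1)" "mate CRx_s (In 15, 4) = (In 0, 1)" "mate CRx_s (In 16, 0) = (Out, 1)" "mate CRx_s (In 16, 1) = (In 0, 0)" "mate CRx_s (In 16, 2) = (In 2, 0)" "mate CRx_s (In 16, 3) = (In 4, 0)" "mate CRx_s (In 16, 4) = (In 5, 0)" "mate CRx_s (In 17, 0) = (In 3, 2)" "mate CRx_s (In 17, 1) = (In 8, 0)" "mate CRx_s (In 17, 2) = (In 10, 0)" "mate CRx_s (In 17, 3) = (In 6, 1)" "mate CRx_s (In 17, 4) = (In 4, 1)"
  by (simp_all add: CRx_mate CRx_ml_def)

lemma CRx_wf: "wf_sim (insert NOR_gate {fanout_gate k | k. k \<ge> 1}) CRx_s"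
proof -
  have "lab CRx_s v \<in> {NOR_gate, fanout_gate 2, fanout_gate 4}" for v by (simp add: CRx_lab)
  moreover have "{NOR_gate, fanout_gate 2, fanout_gate 4} \<subseteq> insert NOR_gate {fanout_gate k | k. k \<ge> 1}" by auto
  ultimately have L: "\<forall>v < nverts CRx_s. lab CRx_s v \<in> insert NOR_gate {fanout_gate k | k. k \<ge> 1}" by blast
  have M: "\<forall>d \<in> darts CRx_s. mate CRx_s d \<in> darts CRx_s \<and> mate CRx_s (mate CRx_s d) = d \<and> mate CRx_s d \<noteq> d"
    by (simp add: CRx_darts CRx_mate_eqs CRx_nverts CRx_nout CRx_lab)
  have O: "\<forall>i < nout CRx_s. fst (mate CRx_s (Out, i)) \<noteq> Out"
    unfolding all_less_upt by (simp add: CRx_darts CRx_mate_eqs CRx_nverts CRx_nout CRx_lab upt_add1)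
  show ?thesis unfolding wf_sim_def using L M O by blast
qed

lemma CRx_faces: "card (faces CRx_s) = 15 \<and> card (darts CRx_s) = 64"
proof -
  have h1: "set (concat [[(Out, 0), (In 15, 1), (In 9, 2), (In 11, 2)], [(Out, 1), (In 16, 1), (In 0, 1), (In 15, 0)], [(Out, 2), (In 7, 0), (In 5, 0), (In 16, 0)], [(Out, 3), (In 11, 0), (In 10, 0), (In 17, 3), (In 6, 2), (In 7, 2)], [(In 0, 0), (In 16, 2), (In 2, 1), (In 12, 0)], [(In 0, 2), (In 12, 1), (In 1, 1), (In 15, 4)], [(In 1, 0), (In 12, 2), (In 2, 2), (In 3, 1)], [(In 1, 2), (In 3, 2), (In 17, 1), (In 8, 1), (In 15, 3)], [(In 2, 0), (In 16, 3), (In 4, 1), (In 17, 0), (In 3, 0)], [(In 4, 0), (In 16, 4), (In 5, 1), (In 13, 0)], [(In 4, 2), (In 13, 1), (In 6, 1), (In 17, 4)], [(In 5, 2), (In 7, 1), (In 6, 0), (In 13, 2)], [(In 8, 0), (In 17, 2), (In 10, 1), (In 14, 0)], [(In 8, 2), (In 14, 1), (In 9, 1), (In 15, 2)], [(In 9, 0), (In 14, 2), (In 10, 2), (In 11, 1)]]) \<subseteq> darts CRx_s" by (simp add: CRx_darts)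
  have h2: "\<forall>d\<in>darts CRx_s. d \<in> set (concat [[(Out, 0), (In 15, 1), (In 9, 2), (In 11, 2)], [(Out, 1), (In 16, 1), (In 0, 1), (In 15, 0)], [(Out, 2), (In 7, 0), (In 5, 0), (In 16, 0)], [(Out, 3), (In 11, 0), (In 10, 0), (In 17, 3), (In 6, 2), (In 7, 2)], [(In 0, 0), (In 16, 2), (In 2, 1), (In 12, 0)], [(In 0, 2), (In 12, 1), (In 1, 1), (In 15, 4)], [(In 1, 0), (In 12, 2), (In 2, 2), (In 3, 1)], [(In 1, 2), (In 3, 2), (In 17, 1), (In 8, 1), (In 15, 3)], [(In 2, 0), (In 16, 3), (In 4, 1), (In 17, 0), (In 3, 0)], [(In 4, 0), (In 16, 4), (In 5, 1), (In 13, 0)], [(In 4, 2), (In 13, 1), (In 6, 1), (In 17, 4)], [(In 5, 2), (In 7, 1), (In 6, 0), (In 13, 2)], [(In 8, 0), (In 17, 2), (In 10, 1), (In 14, 0)], [(In 8, 2), (In 14, 1), (In 9, 1), (In 15, 2)], [(In 9, 0), (In 14, 2), (In 10, 2), (In 11, 1)]])" by (simp add: CRx_darts)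
  have h3: "distinct (concat ([[(Out, 0), (In 15, 1), (In 9, 2), (In 11, 2)], [(Out, 1), (In 16, 1), (In 0, 1), (In 15, 0)], [(Out, 2), (In 7, 0), (In 5, 0), (In 16, 0)], [(Out, 3), (In 11, 0), (In 10, 0), (In 17, 3), (In 6, 2), (In 7, 2)], [(In 0, 0), (In 16, 2), (In 2, 1), (In 12, 0)], [(In 0, 2), (In 12, 1), (In 1, 1), (In 15, 4)], [(In 1, 0), (In 12, 2), (In 2, 2), (In 3, 1)], [(In 1, 2), (In 3, 2), (In 17, 1), (In 8, 1), (In 15, 3)], [(In 2, 0), (In 16, 3), (In 4, 1), (In 17, 0), (In 3, 0)], [(In 4, 0), (In 16, 4), (In 5, 1), (In 13, 0)], [(In 4, 2), (In 13, 1), (In 6, 1), (In 17, 4)], [(In 5, 2), (In 7, 1), (In 6, 0), (In 13, 2)], [(In 8, 0), (In 17, 2), (In 10, 1), (In 14, 0)], [(In 8, 2), (In 14, 1), (In 9, 1), (In 15, 2)], [(In 9, 0), (In 14, 2), (In 10, 2), (In 11, 1)]] :: (vtx \<times> nat) list list))" by simp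
  have h4: "\<forall>l\<in>set [[(Out, 0), (In 15, 1), (In 9, 2), (In 11, 2)], [(Out, 1), (In 16, 1), (In 0, 1), (In 15, 0)], [(Out, 2), (In 7, 0), (In 5, 0), (In 16, 0)], [(Out, 3), (In 11, 0), (In 10, 0), (In 17, 3), (In 6, 2), (In 7, 2)], [(In 0, 0), (In 16, 2), (In 2, 1), (In 12, 0)], [(In 0, 2), (In 12, 1), (In 1, 1), (In 15, 4)], [(In 1, 0), (In 12, 2), (In 2, 2), (In 3, 1)], [(In 1, 2), (In 3, 2), (In 17, 1), (In 8, 1), (In 15, 3)], [(In 2, 0), (In 16, 3), (In 4, 1), (In 17, 0), (In 3, 0)], [(In 4, 0), (In 16, 4), (In 5, 1), (In 13, 0)], [(In 4, 2), (In 13, 1), (In 6, 1), (In 17, 4)], [(In 5, 2), (In 7, 1), (In 6, 0), (In 13, 2)], [(In 8, 0), (In 17, 2), (In 10, 1), (In 14, 0)], [(In 8, 2), (In 14, 1), (In 9, 1), (In 15, 2)], [(In 9, 0), (In 14, 2), (In 10, 2), (In 11, 1)]]. l \<noteq> [] \<and> (\<forall>p\<in>set (zip l (rotate1 l)). face_step CRx_s (fst p) = snd p)"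
      by (simp add: face_step_def rot_def CRx_darts CRx_mate_eqs CRx_nverts CRx_nout CRx_lab upt_add1)
  show ?thesis using faces_list'[OF h1 h2 h3 h4] by simp
qed

lemma CRx_planar: "planar CRx_s"
proof -
  have C: "card (components CRx_s) = 1"
    by (rule components_one[OF CRx_wf, of "[(Out, 0), (Out, 1), (Out, 2), (Out, 3), (In 7, 0), (In 7, 1), (In 11, 0), (In 11, 1), (In 15, 2), (In 15, 3), (In 15, 4), (In 16, 2), (In 16, 3), (In 0, 2), (In 1, 2), (In 3, 2), (In 4, 2), (In 8, 2)]"]) (simp add: CRx_darts CRx_mate_eqs CRx_nverts CRx_nout CRx_lab verts_eq upt_add1)
  have I: "{x \<in> verts CRx_s. ar CRx_s x = 0} = {}" by (auto simp: verts_def CRx_darts CRx_mate_eqs CRx_nverts CRx_nout CRx_lab NOR_gate_def fanout_gate_def split: if_splits)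
  show ?thesis unfolding planar_def card_verts C I using CRx_faces by (simp add: CRx_nverts)
qed

definition CRx_C00 :: "(vtx \<times> nat) set" where "CRx_C00 = {(Out, 0), (Out, 1), (In 1, 0), (In 1, 2), (In 2, 1), (In 2, 2), (In 4, 1), (In 4, 2), (In 6, 1), (In 6, 2), (In 7, 0), (In 7, 2), (In 8, 0), (In 8, 2), (In 10, 0), (In 10, 2), (In 11, 1), (In 11, 2), (In 12, 0), (In 13, 1), (In 13, 2), (In 14, 1), (In 14, 2), (In 15, 1), (In 15, 2), (In 15, 3), (In 15, 4), (In 16, 1), (In 16, 2), (In 16, 3), (In 16, 4), (In 17, 0)}"

definition CRx_C01 :: "(vtx \<times> nat) set" where "CRx_C01 = {(Out, 0), (Out, 3), (In 0, 0), (In 0, 2), (In 2, 0), (In 2, 2), (In 3, 1), (In 3, 2), (In 4, 0), (In 4, 2), (In 5, 0), (In 5, 2), (In 7, 1), (In 7, 2), (In 9, 0), (In 9, 2), (In 10, 1), (In 10, 2), (In 12, 1), (In 12, 2), (In 13, 1), (In 13, 2), (In 14, 0), (In 15, 1), (In 15, 2), (In 15, 3), (In 15, 4), (In 16, 0), (In 17, 1), (In 17, 2), (In 17, 3), (In 17, 4)}"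

definition CRx_C10 :: "(vtx \<times> nat) set" where "CRx_C10 = {(Out, 1), (Out, 2), (In 0, 1), (In 0, 2), (In 1, 1), (In 1, 2), (In 3, 0), (In 3, 2), (In 5, 1), (In 5, 2), (In 6, 0), (In 6, 2), (In 8, 1), (In 8, 2), (In 9, 1), (In 9, 2), (In 11, 0), (In 11, 2), (In 12, 1), (In 12, 2), (In 13, 0), (In 14, 1), (In 14, 2), (In 15, 0), (In 16, 1), (In 16, 2), (In 16, 3), (In 16, 4), (In 17, 1), (In 17, 2), (In 17, 3), (In 17, 4)}"

definition CRx_C11 :: "(vtx \<times> nat) set" where "CRx_C11 = {(Out, 2), (Out, 3), (In 0, 0), (In 0, 1), (In 0, 2), (In 1, 1), (In 1, 2), (In 2, 0), (In 2, 2), (In 4, 0), (In 4, 1), (In 4, 2), (In 5, 0), (In 5, 2), (In 6, 1), (In 6, 2), (In 8, 0), (In 8, 1), (In 8, 2), (In 9, 1), (In 9, 2), (In 10, 0), (In 10, 2), (In 12, 1), (In 12, 2), (In 13, 1), (In 13, 2), (In 14, 1), (In 14, 2), (In 15, 0), (In 16, 0), (In 17, 0)}"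

definition CRx_C :: "bool \<Rightarrow> bool \<Rightarrow> (vtx \<times> nat) set" where
  "CRx_C a b = (if a then (if b then CRx_C00 else CRx_C01) else (if b then CRx_C10 else CRx_C11))"

lemma CRx_C00_sat: "satisfying CRx_s CRx_C00"
proof -
  have sub: "CRx_C00 \<subseteq> darts CRx_s" by (simp add: CRx_C00_def CRx_darts)
  have M: "\<forall>d\<in>darts CRx_s. (d \<in> CRx_C00) \<noteq> (mate CRx_s d \<in> CRx_C00)" by (simp add: CRx_darts CRx_mate_eqs CRx_nverts CRx_nout CRx_lab CRx_C00_def)
  have V: "\<forall>v<nverts CRx_s. {i. (In v, i) \<in> CRx_C00} \<in> cons (lab CRx_s v)"
    unfolding all_less_upt
    apply (simp add: CRx_nverts upt_add1)
    apply (simp add: NOR_local[OF sub] Fan_local[OF sub] CRx_nverts CRx_lab upt_add1)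
    apply (simp add: CRx_C00_def upt_add1)
    done
  show ?thesis unfolding satisfying_def assignment_def using sub M V by blast
qed

lemma CRx_C01_sat: "satisfying CRx_s CRx_C01"
proof -
  have sub: "CRx_C01 \<subseteq> darts CRx_s" by (simp add: CRx_C01_def CRx_darts)
  have M: "\<forall>d\<in>darts CRx_s. (d \<in> CRx_C01) \<noteq> (mate CRx_s d \<in> CRx_C01)" by (simp add: CRx_darts CRx_mate_eqs CRx_nverts CRx_nout CRx_lab CRx_C01_def)
  have V: "\<forall>v<nverts CRx_s. {i. (In v, i) \<in> CRx_C01} \<in> cons (lab CRx_s v)"
    unfolding all_less_upt
    apply (simp add: CRx_nverts upt_add1)
    apply (simp add: NOR_local[OF sub] Fan_local[OF sub] CRx_nverts CRx_lab upt_add1)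
    apply (simp add: CRx_C01_def upt_add1)
    done
  show ?thesis unfolding satisfying_def assignment_def using sub M V by blast
qed

lemma CRx_C10_sat: "satisfying CRx_s CRx_C10"
proof -
  have sub: "CRx_C10 \<subseteq> darts CRx_s" by (simp add: CRx_C10_def CRx_darts)
  have M: "\<forall>d\<in>darts CRx_s. (d \<in> CRx_C10) \<noteq> (mate CRx_s d \<in> CRx_C10)" by (simp add: CRx_darts CRx_mate_eqs CRx_nverts CRx_nout CRx_lab CRx_C10_def)
  have V: "\<forall>v<nverts CRx_s. {i. (In v, i) \<in> CRx_C10} \<in> cons (lab CRx_s v)"
    unfolding all_less_upt
    apply (simp add: CRx_nverts upt_add1)
    apply (simp add: NOR_local[OF sub] Fan_local[OF sub] CRx_nverts CRx_lab upt_add1)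
    apply (simp add: CRx_C10_def upt_add1)
    done
  show ?thesis unfolding satisfying_def assignment_def using sub M V by blast
qed

lemma CRx_C11_sat: "satisfying CRx_s CRx_C11"
proof -
  have sub: "CRx_C11 \<subseteq> darts CRx_s" by (simp add: CRx_C11_def CRx_darts)
  have M: "\<forall>d\<in>darts CRx_s. (d \<in> CRx_C11) \<noteq> (mate CRx_s d \<in> CRx_C11)" by (simp add: CRx_darts CRx_mate_eqs CRx_nverts CRx_nout CRx_lab CRx_C11_def)
  have V: "\<forall>v<nverts CRx_s. {i. (In v, i) \<in> CRx_C11} \<in> cons (lab CRx_s v)"
    unfolding all_less_upt
    apply (simp add: CRx_nverts upt_add1)
    apply (simp add: NOR_local[OF sub] Fan_local[OF sub] CRx_nverts CRx_lab upt_add1)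
    apply (simp add: CRx_C11_def upt_add1)
    done
  show ?thesis unfolding satisfying_def assignment_def using sub M V by blast
qed

lemma CRx_sat_imp:
  assumes sat: "satisfying CRx_s A"
  shows "A = CRx_C ((Out, 0) \<in> A) ((Out, 1) \<in> A)"
proof -
  have r0: "((In 15, 0) \<in> A) = ((Out, 0) \<notin> A)"
    by (rule Mate_rule[OF sat, of "(Out, 0)"]) (simp_all add: CRx_darts CRx_mate_eqs CRx_nverts CRx_nout CRx_lab)
  have r1: "((In 16, 0) \<in> A) = ((Out, 1) \<notin> A)"
    by (rule Mate_rule[OF sat, of "(Out, 1)"]) (simp_all add: CRx_darts CRx_mate_eqs CRx_nverts CRx_nout CRx_lab)
  have r2: "((Out, 2) \<in> A) = ((In 7, 2) \<notin> A)"
    by (rule Mate_rule[OF sat, of "(In 7, 2)"]) (simp_all add: CRx_darts CRx_mate_eqs CRx_nverts CRx_nout CRx_lab)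
  have r3: "((Out, 3) \<in> A) = ((In 11, 2) \<notin> A)"
    by (rule Mate_rule[OF sat, of "(In 11, 2)"]) (simp_all add: CRx_darts CRx_mate_eqs CRx_nverts CRx_nout CRx_lab)
  have r4: "((In 0, 1) \<in> A) = ((In 15, 4) \<notin> A)"
    by (rule Mate_rule[OF sat, of "(In 15, 4)"]) (simp_all add: CRx_darts CRx_mate_eqs CRx_nverts CRx_nout CRx_lab)
  have r5: "((In 1, 1) \<in> A) = ((In 15, 3) \<notin> A)"
    by (rule Mate_rule[OF sat, of "(In 15, 3)"]) (simp_all add: CRx_darts CRx_mate_eqs CRx_nverts CRx_nout CRx_lab)
  have r6: "((In 8, 1) \<in> A) = ((In 15, 2) \<notin> A)"
    by (rule Mate_rule[OF sat, of "(In 15, 2)"]) (simp_all add: CRx_darts CRx_mate_eqs CRx_nverts CRx_nout CRx_lab)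
  have r7: "((In 9, 1) \<in> A) = ((In 15, 1) \<notin> A)"
    by (rule Mate_rule[OF sat, of "(In 15, 1)"]) (simp_all add: CRx_darts CRx_mate_eqs CRx_nverts CRx_nout CRx_lab)
  have r8: "((In 0, 0) \<in> A) = ((In 16, 1) \<notin> A)"
    by (rule Mate_rule[OF sat, of "(In 16, 1)"]) (simp_all add: CRx_darts CRx_mate_eqs CRx_nverts CRx_nout CRx_lab)
  have r9: "((In 2, 0) \<in> A) = ((In 16, 2) \<notin> A)"
    by (rule Mate_rule[OF sat, of "(In 16, 2)"]) (simp_all add: CRx_darts CRx_mate_eqs CRx_nverts CRx_nout CRx_lab)
  have r10: "((In 4, 0) \<in> A) = ((In 16, 3) \<notin> A)"
    by (rule Mate_rule[OF sat, of "(In 16, 3)"]) (simp_all add: CRx_darts CRx_mate_eqs CRx_nverts CRx_nout CRx_lab)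
  have r11: "((In 5, 0) \<in> A) = ((In 16, 4) \<notin> A)"
    by (rule Mate_rule[OF sat, of "(In 16, 4)"]) (simp_all add: CRx_darts CRx_mate_eqs CRx_nverts CRx_nout CRx_lab)
  have r12: "((In 17, 0) \<in> A) = ((In 3, 2) \<notin> A)"
    by (rule Mate_rule[OF sat, of "(In 3, 2)"]) (simp_all add: CRx_darts CRx_mate_eqs CRx_nverts CRx_nout CRx_lab)
  have r13: "((In 4, 1) \<in> A) = ((In 17, 4) \<notin> A)"
    by (rule Mate_rule[OF sat, of "(In 17, 4)"]) (simp_all add: CRx_darts CRx_mate_eqs CRx_nverts CRx_nout CRx_lab)
  have r14: "((In 6, 1) \<in> A) = ((In 17, 3) \<notin> A)"
    by (rule Mate_rule[OF sat, of "(In 17, 3)"]) (simp_all add: CRx_darts CRx_mate_eqs CRx_nverts CRx_nout CRx_lab)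
  have r15: "((In 8, 0) \<in> A) = ((In 17, 1) \<notin> A)"
    by (rule Mate_rule[OF sat, of "(In 17, 1)"]) (simp_all add: CRx_darts CRx_mate_eqs CRx_nverts CRx_nout CRx_lab)
  have r16: "((In 10, 0) \<in> A) = ((In 17, 2) \<notin> A)"
    by (rule Mate_rule[OF sat, of "(In 17, 2)"]) (simp_all add: CRx_darts CRx_mate_eqs CRx_nverts CRx_nout CRx_lab)
  have r17: "((In 12, 0) \<in> A) = ((In 0, 2) \<notin> A)"
    by (rule Mate_rule[OF sat, of "(In 0, 2)"]) (simp_all add: CRx_darts CRx_mate_eqs CRx_nverts CRx_nout CRx_lab)
  have r18: "((In 1, 0) \<in> A) = ((In 12, 1) \<notin> A)"
    by (rule Mate_rule[OF sat, of "(In 12, 1)"]) (simp_all add: CRx_darts CRx_mate_eqs CRx_nverts CRx_nout CRx_lab)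
  have r19: "((In 2, 1) \<in> A) = ((In 12, 2) \<notin> A)"
    by (rule Mate_rule[OF sat, of "(In 12, 2)"]) (simp_all add: CRx_darts CRx_mate_eqs CRx_nverts CRx_nout CRx_lab)
  have r20: "((In 3, 1) \<in> A) = ((In 1, 2) \<notin> A)"
    by (rule Mate_rule[OF sat, of "(In 1, 2)"]) (simp_all add: CRx_darts CRx_mate_eqs CRx_nverts CRx_nout CRx_lab)
  have r21: "((In 3, 0) \<in> A) = ((In 2, 2) \<notin> A)"
    by (rule Mate_rule[OF sat, of "(In 2, 2)"]) (simp_all add: CRx_darts CRx_mate_eqs CRx_nverts CRx_nout CRx_lab)
  have r22: "((In 13, 0) \<in> A) = ((In 4, 2) \<notin> A)"
    by (rule Mate_rule[OF sat, of "(In 4, 2)"]) (simp_all add: CRx_darts CRx_mate_eqs CRx_nverts CRx_nout CRx_lab)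
  have r23: "((In 5, 1) \<in> A) = ((In 13, 2) \<notin> A)"
    by (rule Mate_rule[OF sat, of "(In 13, 2)"]) (simp_all add: CRx_darts CRx_mate_eqs CRx_nverts CRx_nout CRx_lab)
  have r24: "((In 6, 0) \<in> A) = ((In 13, 1) \<notin> A)"
    by (rule Mate_rule[OF sat, of "(In 13, 1)"]) (simp_all add: CRx_darts CRx_mate_eqs CRx_nverts CRx_nout CRx_lab)
  have r25: "((In 7, 0) \<in> A) = ((In 5, 2) \<notin> A)"
    by (rule Mate_rule[OF sat, of "(In 5, 2)"]) (simp_all add: CRx_darts CRx_mate_eqs CRx_nverts CRx_nout CRx_lab)
  have r26: "((In 7, 1) \<in> A) = ((In 6, 2) \<notin> A)"
    by (rule Mate_rule[OF sat, of "(In 6, 2)"]) (simp_all add: CRx_darts CRx_mate_eqs CRx_nverts CRx_nout CRx_lab)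
  have r27: "((In 14, 0) \<in> A) = ((In 8, 2) \<notin> A)"
    by (rule Mate_rule[OF sat, of "(In 8, 2)"]) (simp_all add: CRx_darts CRx_mate_eqs CRx_nverts CRx_nout CRx_lab)
  have r28: "((In 9, 0) \<in> A) = ((In 14, 1) \<notin> A)"
    by (rule Mate_rule[OF sat, of "(In 14, 1)"]) (simp_all add: CRx_darts CRx_mate_eqs CRx_nverts CRx_nout CRx_lab)
  have r29: "((In 10, 1) \<in> A) = ((In 14, 2) \<notin> A)"
    by (rule Mate_rule[OF sat, of "(In 14, 2)"]) (simp_all add: CRx_darts CRx_mate_eqs CRx_nverts CRx_nout CRx_lab)
  have r30: "((In 11, 1) \<in> A) = ((In 9, 2) \<notin> A)"
    by (rule Mate_rule[OF sat, of "(In 9, 2)"]) (simp_all add: CRx_darts CRx_mate_eqs CRx_nverts CRx_nout CRx_lab)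
  have r31: "((In 11, 0) \<in> A) = ((In 10, 2) \<notin> A)"
    by (rule Mate_rule[OF sat, of "(In 10, 2)"]) (simp_all add: CRx_darts CRx_mate_eqs CRx_nverts CRx_nout CRx_lab)
  have r32: "((In 0, 2) \<in> A) = ((In 0, 0) \<in> A \<or> (In 0, 1) \<in> A)"
    by (rule NOR_rule[OF sat]) (simp_all add: CRx_nverts CRx_lab)
  have r33: "((In 1, 2) \<in> A) = ((In 1, 0) \<in> A \<or> (In 1, 1) \<in> A)"
    by (rule NOR_rule[OF sat]) (simp_all add: CRx_nverts CRx_lab)
  have r34: "((In 2, 2) \<in> A) = ((In 2, 0) \<in> A \<or> (In 2, 1) \<in> A)"
    by (rule NOR_rule[OF sat]) (simp_all add: CRx_nverts CRx_lab)
  have r35: "((In 3, 2) \<in> A) = ((In 3, 0) \<in> A \<or> (In 3, 1) \<in> A)"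
    by (rule NOR_rule[OF sat]) (simp_all add: CRx_nverts CRx_lab)
  have r36: "((In 4, 2) \<in> A) = ((In 4, 0) \<in> A \<or> (In 4, 1) \<in> A)"
    by (rule NOR_rule[OF sat]) (simp_all add: CRx_nverts CRx_lab)
  have r37: "((In 5, 2) \<in> A) = ((In 5, 0) \<in> A \<or> (In 5, 1) \<in> A)"
    by (rule NOR_rule[OF sat]) (simp_all add: CRx_nverts CRx_lab)
  have r38: "((In 6, 2) \<in> A) = ((In 6, 0) \<in> A \<or> (In 6, 1) \<in> A)"
    by (rule NOR_rule[OF sat]) (simp_all add: CRx_nverts CRx_lab)
  have r39: "((In 7, 2) \<in> A) = ((In 7, 0) \<in> A \<or> (In 7, 1) \<in> A)"
    by (rule NOR_rule[OF sat]) (simp_all add: CRx_nverts CRx_lab)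
  have r40: "((In 8, 2) \<in> A) = ((In 8, 0) \<in> A \<or> (In 8, 1) \<in> A)"
    by (rule NOR_rule[OF sat]) (simp_all add: CRx_nverts CRx_lab)
  have r41: "((In 9, 2) \<in> A) = ((In 9, 0) \<in> A \<or> (In 9, 1) \<in> A)"
    by (rule NOR_rule[OF sat]) (simp_all add: CRx_nverts CRx_lab)
  have r42: "((In 10, 2) \<in> A) = ((In 10, 0) \<in> A \<or> (In 10, 1) \<in> A)"
    by (rule NOR_rule[OF sat]) (simp_all add: CRx_nverts CRx_lab)
  have r43: "((In 11, 2) \<in> A) = ((In 11, 0) \<in> A \<or> (In 11, 1) \<in> A)"
    by (rule NOR_rule[OF sat]) (simp_all add: CRx_nverts CRx_lab)
  have r44: "((In 12, 1) \<in> A) = ((In 12, 0) \<notin> A)"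
    by (rule Fan_rule[OF sat, of 12 2 1]) (simp_all add: CRx_nverts CRx_lab)
  have r45: "((In 12, 2) \<in> A) = ((In 12, 0) \<notin> A)"
    by (rule Fan_rule[OF sat, of 12 2 2]) (simp_all add: CRx_nverts CRx_lab)
  have r46: "((In 13, 1) \<in> A) = ((In 13, 0) \<notin> A)"
    by (rule Fan_rule[OF sat, of 13 2 1]) (simp_all add: CRx_nverts CRx_lab)
  have r47: "((In 13, 2) \<in> A) = ((In 13, 0) \<notin> A)"
    by (rule Fan_rule[OF sat, of 13 2 2]) (simp_all add: CRx_nverts CRx_lab)
  have r48: "((In 14, 1) \<in> A) = ((In 14, 0) \<notin> A)"
    by (rule Fan_rule[OF sat, of 14 2 1]) (simp_all add: CRx_nverts CRx_lab)
  have r49: "((In 14, 2) \<in> A) = ((In 14, 0) \<notin> A)"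
    by (rule Fan_rule[OF sat, of 14 2 2]) (simp_all add: CRx_nverts CRx_lab)
  have r50: "((In 15, 1) \<in> A) = ((In 15, 0) \<notin> A)"
    by (rule Fan_rule[OF sat, of 15 4 1]) (simp_all add: CRx_nverts CRx_lab)
  have r51: "((In 15, 2) \<in> A) = ((In 15, 0) \<notin> A)"
    by (rule Fan_rule[OF sat, of 15 4 2]) (simp_all add: CRx_nverts CRx_lab)
  have r52: "((In 15, 3) \<in> A) = ((In 15, 0) \<notin> A)"
    by (rule Fan_rule[OF sat, of 15 4 3]) (simp_all add: CRx_nverts CRx_lab)
  have r53: "((In 15, 4) \<in> A) = ((In 15, 0) \<notin> A)"
    by (rule Fan_rule[OF sat, of 15 4 4]) (simp_all add: CRx_nverts CRx_lab)
  have r54: "((In 16, 1) \<in> A) = ((In 16, 0) \<notin> A)"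
    by (rule Fan_rule[OF sat, of 16 4 1]) (simp_all add: CRx_nverts CRx_lab)
  have r55: "((In 16, 2) \<in> A) = ((In 16, 0) \<notin> A)"
    by (rule Fan_rule[OF sat, of 16 4 2]) (simp_all add: CRx_nverts CRx_lab)
  have r56: "((In 16, 3) \<in> A) = ((In 16, 0) \<notin> A)"
    by (rule Fan_rule[OF sat, of 16 4 3]) (simp_all add: CRx_nverts CRx_lab)
  have r57: "((In 16, 4) \<in> A) = ((In 16, 0) \<notin> A)"
    by (rule Fan_rule[OF sat, of 16 4 4]) (simp_all add: CRx_nverts CRx_lab)
  have r58: "((In 17, 1) \<in> A) = ((In 17, 0) \<notin> A)"
    by (rule Fan_rule[OF sat, of 17 4 1]) (simp_all add: CRx_nverts CRx_lab)
  have r59: "((In 17, 2) \<in> A) = ((In 17, 0) \<notin> A)"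
    by (rule Fan_rule[OF sat, of 17 4 2]) (simp_all add: CRx_nverts CRx_lab)
  have r60: "((In 17, 3) \<in> A) = ((In 17, 0) \<notin> A)"
    by (rule Fan_rule[OF sat, of 17 4 3]) (simp_all add: CRx_nverts CRx_lab)
  have r61: "((In 17, 4) \<in> A) = ((In 17, 0) \<notin> A)"
    by (rule Fan_rule[OF sat, of 17 4 4]) (simp_all add: CRx_nverts CRx_lab)
  have sub: "A \<subseteq> darts CRx_s" using sat unfolding satisfying_def assignment_def by blast
  have sub2: "CRx_C a b \<subseteq> darts CRx_s" for a b by (simp add: CRx_C_def CRx_C00_def CRx_C01_def CRx_C10_def CRx_C11_def CRx_darts)
  have E: "\<forall>d\<in>darts CRx_s. (d \<in> A) = (d \<in> CRx_C ((Out, 0) \<in> A) ((Out, 1) \<in> A))"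
    by (cases "(Out, 0) \<in> A"; cases "(Out, 1) \<in> A"; simp add: CRx_darts CRx_C_def CRx_C00_def CRx_C01_def CRx_C10_def CRx_C11_def r0 r1 r2 r3 r4 r5 r6 r7 r8 r9 r10 r11 r12 r13 r14 r15 r16 r17 r18 r19 r20 r21 r22 r23 r24 r25 r26 r27 r28 r29 r30 r31 r32 r33 r34 r35 r36 r37 r38 r39 r40 r41 r42 r43 r44 r45 r46 r47 r48 r49 r50 r51 r52 r53 r54 r55 r56 r57 r58 r59 r60 r61)
  show ?thesis using sub sub2 E by blast
qed

lemma CRx_char: "satisfying CRx_s A \<longleftrightarrow> A \<in> set [CRx_C11, CRx_C01, CRx_C10, CRx_C00]"
proof
  assume "satisfying CRx_s A"
  then have "A = CRx_C ((Out, 0) \<in> A) ((Out, 1) \<in> A)" by (rule CRx_sat_imp)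
  then show "A \<in> set [CRx_C11, CRx_C01, CRx_C10, CRx_C00]" by (simp add: CRx_C_def split: if_splits)
next
  assume "A \<in> set [CRx_C11, CRx_C01, CRx_C10, CRx_C00]"
  then show "satisfying CRx_s A" using CRx_C00_sat CRx_C01_sat CRx_C10_sat CRx_C11_sat by auto
qed

lemma CRx_pps: "planar_parsimoniously_simulates (insert NOR_gate {fanout_gate k | k. k \<ge> 1}) crossover"
proof -
  have D: "distinct (map (\<lambda>C. filter (\<lambda>i. (Out, i) \<notin> C) [0..<nout CRx_s]) [CRx_C11, CRx_C01, CRx_C10, CRx_C00])"
    by (simp add: CRx_nout CRx_C00_def CRx_C01_def CRx_C10_def CRx_C11_def upt_add1)
  have P: "parsimonious CRx_s" by (rule finish(1)[OF CRx_char D])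
  have SC: "sim_cons CRx_s = (\<lambda>C. set (filter (\<lambda>i. (Out, i) \<notin> C) [0..<nout CRx_s])) ` set [CRx_C11, CRx_C01, CRx_C10, CRx_C00]"
    by (rule finish(2)[OF CRx_char D])
  have "simulates CRx_s crossover" unfolding simulates_def SC
    apply (rule conjI)
     apply (simp add: crossover_def CRx_nout)
    apply (rule exI[of _ 0])
    apply (simp add: crossover_def CRx_nout CRx_C00_def CRx_C01_def CRx_C10_def CRx_C11_def upt_add1 insert_commute)
    done
  then show ?thesis unfolding planar_parsimoniously_simulates_def using CRx_wf CRx_planar P by blast
qed



theorem mainTheorem14:
  defines "S \<equiv> insert NOR_gate {fanout_gate k | k. k \<ge> 1}"
  shows "planar_parsimoniously_simulates S OR_gate
       \<and> planar_parsimoniously_simulates S AND_gate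
       \<and> planar_parsimoniously_simulates S crossover"
  unfolding S_def using ORx_pps ANDx_pps CRx_pps by blast

end
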